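(* Let $\phi:D_{\mathbb R^m}[0,T]\to[0,\infty)$ be measurable (with $D_{\mathbb R^m}[0,T]$ the Skorokhod space of càdlàg paths, and $R$, $I$ regarded as random elements of it). Then for every $k\in\mathbb Z_+^m$ and $z_0\in\mathbb Z_+^{n}$ for which the conditioning events below have positive $P_0$-probability, \[ \mathbb E_0[\phi(R)\mid R(T)=k,\,Z_0=z_0,\,O]=\mathbb E_0[\phi(I)\mid I(T)=k,\,\tilde Z_0=z_0,\,O]. \]
   Context: Fix integers $n_1,n_2,m_1,m_2\ge 0$ with $n=n_1+n_2$, $m=m_1+m_2$ and $n_2=m_2$, a time $T>0$, and an observation $y\in\mathbb Z_+^{n_2}$. Let $\nu\in\mathbb Z^{n\times m}$; let $\nu'$ be its first $n_1$ rows and $\nu''$ its last $n_2$ rows, and assume $\nu''=[A\;B]$ with $A\in\mathbb Z^{n_2\times m_1}$ and $B\in\mathbb Z^{m_2\times m_2}$ invertible. For $\Delta y\in\mathbb Z^{n_2}$ and $k'\in\mathbb Z_+^{m_1}$ put $G(\Delta y,k')=B^{-1}(\Delta y-Ak')$ and $S_{\Delta y}=\{k'\in\mathbb Z_+^{m_1}: G(\Delta y,k')\in\mathbb Z_+^{m_2}\}$. Let $\lambda=(\lambda',\lambda''):[0,T]\times\mathbb Z_+^{n}\times\mathbb Z_+^{n_2}\to(0,\infty)^m$ be strictly positive, measurable and integrable in $t$, with $\lambda'$ its first $m_1$ and $\lambda''$ its last $m_2$ components; let $\mu$ be a probability measure on $\mathbb Z_+^n$. An $m$-variate Poisson random variable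 (resp. inhomogeneous Poisson process) with vector mean (resp. intensity) has independent components with the corresponding component means (intensities). For $(x_0,y_0)\in\mathbb Z_+^n$, $\rho(\cdot,x_0,y_0,y)$ denotes the p.m.f. on $\mathbb Z_+^{m_2}$ of an $m_2$-variate Poisson random variable with mean $\int_0^T\lambda''(t,(x_0,y_0),y)\,dt$. Lab process: on a probability space $(\Omega,\mathcal F,P_0)$ let $Z_0=(X_0,Y_0)$ take values in $\mathbb Z_+^{n_1}\times\mathbb Z_+^{n_2}$, let $R=(R',R'')$ ($R'$ with $m_1$, $R''$ with $m_2$ components) be a càdlàg $m$-variate counting process on $[0,T]$ with $R(0)=0$, and set $Z(t)=(X(t),Y(t))=Z_0+\nu R(t)$, so $Y(t)=Y_0+\nu''R(t)$. Let $O_p\in\mathcal F$ with $P_0(O_p)>0$. Under $P_0$: conditioned on $O_p$, $Z_0$ has law $\mu$; conditioned on $O_p\cap\{Z_0=z_0\}$, $R$ is an $m$-variate inhomogeneous Poisson process with intensity $t\mapsto\lambda(t,z_0,y)$. Let $O_y=\{Y(T)=y\}$, $O=O_p\cap O_y$, and assume $P_0(O)>0$. Filter variables: let $(U_{0,i},V_{0,i},K'_i)_{i\in\mathbb N}$ be random variables in $\mathbb Z_+^{n_1}\times\mathbb Z_+^{n_2}\times\mathbb Z_+^{m_1}$ such that, under $P_0$ conditioned on $O_p$, these triples are i.i.d. and independent of $(Z_0,R)$, $(U_{0,i},V_{0,i})$ has law $\mu$, and conditioned additionally on $(U_{0,i},V_{0,i})=(x_0,y_0)$, $K'_i$ is $m_1$-variate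 Poisson with mean $\int_0^T\lambda'(t,(x_0,y_0),y)\,dt$. Let $N=\min\{i\in\mathbb N: K'_i\in S_{y-V_{0,i}}\}$ (finite $P_0$-a.s.), and define $K'=K'_N$, $U_0=U_{0,N}$, $V_0=V_{0,N}$, $\tilde Z_0=(U_0,V_0)$, $K''=G(y-V_0,K')$, $K=(K',K'')$, and $W=\rho(K'',U_0,V_0,y)$. Interpolated filter process: let $\zeta^i_l$ ($i=1,\dots,m$, $l\in\mathbb N$) be i.i.d. uniform on $[0,1]$ and, given $O_p$, independent of $Z_0,R$ and of all filter variables above. For $z_0\in\mathbb Z_+^n$ let $\eta_i(t;z_0)=\int_0^t\lambda_i(s,z_0,y)\,ds$ (strictly increasing in $t$). Set $t^i_l=\eta_i^{-1}\big(\zeta^i_l\,\eta_i(T;\tilde Z_0);\tilde Z_0\big)$, $I_i(t)=\sum_{l=1}^{K_i}1_{[t^i_l,\infty)}(t)$ for $t\in[0,T]$, $I=(I_1,\dots,I_m)$ (so $I(T)=K$), and $\tilde Z(t)=\tilde Z_0+\nu I(t)$. $R$ denotes also its restriction to $[0,T]$. *)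

theory Defs
  imports "HOL-Probability.Probability"
begin

(* Vectors in Z_+^d (resp. Z^d, R^d) are functions on nat that vanish at indices >= d. *)
definition vecs :: "nat \<Rightarrow> (nat \<Rightarrow> 'b::zero) set" where
  "vecs d = {x. \<forall>i\<ge>d. x i = 0}"

definition poisson_prob :: "real \<Rightarrow> nat \<Rightarrow> real" where
  "poisson_prob r j = exp (- r) * r ^ j / fact j"

(* Path space on [0,T] with values in R^m, with the sigma-algebra generated by
   the evaluation maps (whose trace on D_{R^m}[0,T] is the Skorokhod Borel sigma-algebra). *)
definition path_space :: "nat \<Rightarrow> real \<Rightarrow> (real \<Rightarrow> nat \<Rightarrow> real) measure" where
  "path_space m T = PiM {0..T} (\<lambda>_. PiM {..<m} (\<lambda>_. borel))"

definition as_path :: "nat \<Rightarrow> real \<Rightarrow> (real \<Rightarrow> nat \<Rightarrow> nat) \<Rightarrow> real \<Rightarrow> nat \<Rightarrow> real" where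
  "as_path m T p = (\<lambda>t\<in>{0..T}. \<lambda>i\<in>{..<m}. real (p t i))"

definition counting_path :: "nat \<Rightarrow> real \<Rightarrow> (real \<Rightarrow> nat \<Rightarrow> nat) \<Rightarrow> bool" where
  "counting_path m T p \<longleftrightarrow> p 0 = (\<lambda>_. 0) \<and> (\<forall>t\<in>{0..T}. p t \<in> vecs m) \<and>
     (\<forall>i<m. mono_on {0..T} (\<lambda>t. p t i)) \<and>
     (\<forall>i<m. \<forall>t\<in>{0..<T}. \<exists>e>0. \<forall>s\<in>{t..<t+e}. p s i = p t i)"

(* Conditioned on the event E (under P), X is an m-variate inhomogeneous Poisson process
   on [0,T] with intensity (lam 0, ..., lam (m-1)): independent components with
   independent Poisson increments with means the integrated intensities. *)
definition cond_poisson_process ::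
  "'a measure \<Rightarrow> 'a set \<Rightarrow> ('a \<Rightarrow> real \<Rightarrow> nat \<Rightarrow> nat) \<Rightarrow> nat \<Rightarrow> real \<Rightarrow> (nat \<Rightarrow> real \<Rightarrow> real) \<Rightarrow> bool"
where
  "cond_poisson_process P E X m T lam \<longleftrightarrow>
     (\<forall>(r::nat) (ts::nat \<Rightarrow> real) (a::nat \<Rightarrow> nat \<Rightarrow> nat).
        ts 0 = 0 \<longrightarrow> (\<forall>j<r. ts j \<le> ts (Suc j)) \<longrightarrow> ts r \<le> T \<longrightarrow>
        measure P (E \<inter> {\<omega>\<in>space P. \<forall>i<m. \<forall>j<r. X \<omega> (ts (Suc j)) i = X \<omega> (ts j) i + a i j})
        = measure P E * (\<Prod>i<m. \<Prod>j<r. poisson_prob (LINT u:{ts j..ts (Suc j)}|lborel. lam i u) (a i j)))"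

(* B = last n2 rows, last m2 columns of nu; invertible as a real matrix *)
definition block_invertible :: "nat \<Rightarrow> nat \<Rightarrow> nat \<Rightarrow> (nat \<Rightarrow> nat \<Rightarrow> int) \<Rightarrow> bool" where
  "block_invertible n1 m1 m2 \<nu> \<longleftrightarrow>
     (\<forall>v::nat \<Rightarrow> real. \<exists>!x::nat \<Rightarrow> real. x \<in> vecs m2 \<and>
        (\<forall>i<m2. (\<Sum>j<m2. real_of_int (\<nu> (n1+i) (m1+j)) * x j) = v i))"

(* G(dy,k') = B^{-1}(dy - A k') *)
definition Gvec :: "nat \<Rightarrow> nat \<Rightarrow> nat \<Rightarrow> (nat \<Rightarrow> nat \<Rightarrow> int) \<Rightarrow> (nat \<Rightarrow> int) \<Rightarrow> (nat \<Rightarrow> nat) \<Rightarrow> nat \<Rightarrow> real" where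
  "Gvec n1 m1 m2 \<nu> dy k' = (THE x. x \<in> vecs m2 \<and>
     (\<forall>i<m2. (\<Sum>j<m2. real_of_int (\<nu> (n1+i) (m1+j)) * x j)
              = real_of_int (dy i) - (\<Sum>j<m1. real_of_int (\<nu> (n1+i) j) * real (k' j))))"

definition Sset :: "nat \<Rightarrow> nat \<Rightarrow> nat \<Rightarrow> (nat \<Rightarrow> nat \<Rightarrow> int) \<Rightarrow> (nat \<Rightarrow> int) \<Rightarrow> (nat \<Rightarrow> nat) set" where
  "Sset n1 m1 m2 \<nu> dy = {k'. k' \<in> vecs m1 \<and> (\<forall>i<m2. Gvec n1 m1 m2 \<nu> dy k' i \<in> \<nat>)}"

(* y - V_0 where z = (U_0, V_0) *)
definition obs_gap :: "nat \<Rightarrow> (nat \<Rightarrow> nat) \<Rightarrow> (nat \<Rightarrow> nat) \<Rightarrow> nat \<Rightarrow> int" where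
  "obs_gap n1 y z = (\<lambda>j. int (y j) - int (z (n1 + j)))"

(* O_y = {Y(T) = y} where Y(T) = Y_0 + nu'' R(T) *)
definition obs_event :: "'a measure \<Rightarrow> nat \<Rightarrow> nat \<Rightarrow> nat \<Rightarrow> (nat \<Rightarrow> nat \<Rightarrow> int) \<Rightarrow> (nat \<Rightarrow> nat) \<Rightarrow> ('a \<Rightarrow> nat \<Rightarrow> nat)
    \<Rightarrow> ('a \<Rightarrow> real \<Rightarrow> nat \<Rightarrow> nat) \<Rightarrow> real \<Rightarrow> 'a set" where
  "obs_event P n1 n2 m \<nu> y Z0 R T = {\<omega>\<in>space P. \<forall>i<n2.
      int (Z0 \<omega> (n1+i)) + (\<Sum>j<m. \<nu> (n1+i) j * int (R \<omega> T j)) = int (y i)}"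

definition sel_index :: "nat \<Rightarrow> nat \<Rightarrow> nat \<Rightarrow> (nat \<Rightarrow> nat \<Rightarrow> int) \<Rightarrow> (nat \<Rightarrow> nat)
    \<Rightarrow> (nat \<Rightarrow> 'a \<Rightarrow> nat \<Rightarrow> nat) \<Rightarrow> (nat \<Rightarrow> 'a \<Rightarrow> nat \<Rightarrow> nat) \<Rightarrow> 'a \<Rightarrow> nat" where
  "sel_index n1 m1 m2 \<nu> y Zf Kp \<omega> = (LEAST i. Kp i \<omega> \<in> Sset n1 m1 m2 \<nu> (obs_gap n1 y (Zf i \<omega>)))"

definition Ztil0 :: "nat \<Rightarrow> nat \<Rightarrow> nat \<Rightarrow> (nat \<Rightarrow> nat \<Rightarrow> int) \<Rightarrow> (nat \<Rightarrow> nat)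
    \<Rightarrow> (nat \<Rightarrow> 'a \<Rightarrow> nat \<Rightarrow> nat) \<Rightarrow> (nat \<Rightarrow> 'a \<Rightarrow> nat \<Rightarrow> nat) \<Rightarrow> 'a \<Rightarrow> nat \<Rightarrow> nat" where
  "Ztil0 n1 m1 m2 \<nu> y Zf Kp \<omega> = Zf (sel_index n1 m1 m2 \<nu> y Zf Kp \<omega>) \<omega>"

definition Kfull :: "nat \<Rightarrow> nat \<Rightarrow> nat \<Rightarrow> (nat \<Rightarrow> nat \<Rightarrow> int) \<Rightarrow> (nat \<Rightarrow> nat)
    \<Rightarrow> (nat \<Rightarrow> 'a \<Rightarrow> nat \<Rightarrow> nat) \<Rightarrow> (nat \<Rightarrow> 'a \<Rightarrow> nat \<Rightarrow> nat) \<Rightarrow> 'a \<Rightarrow> nat \<Rightarrow> nat" where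
  "Kfull n1 m1 m2 \<nu> y Zf Kp \<omega> j =
     (let N = sel_index n1 m1 m2 \<nu> y Zf Kp \<omega>; K' = Kp N \<omega>; V = Zf N \<omega> in
      if j < m1 then K' j
      else if j < m1 + m2 then nat \<lfloor>Gvec n1 m1 m2 \<nu> (obs_gap n1 y V) K' (j - m1)\<rfloor>
      else 0)"

definition eta :: "(real \<Rightarrow> (nat \<Rightarrow> nat) \<Rightarrow> (nat \<Rightarrow> nat) \<Rightarrow> nat \<Rightarrow> real) \<Rightarrow> (nat \<Rightarrow> nat)
    \<Rightarrow> nat \<Rightarrow> (nat \<Rightarrow> nat) \<Rightarrow> real \<Rightarrow> real" where
  "eta lam y i z t = (LINT s:{0..t}|lborel. lam s z y i)"

definition eta_inv :: "(real \<Rightarrow> (nat \<Rightarrow> nat) \<Rightarrow> (nat \<Rightarrow> nat) \<Rightarrow> nat \<Rightarrow> real) \<Rightarrow> (nat \<Rightarrow> nat)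
    \<Rightarrow> real \<Rightarrow> nat \<Rightarrow> (nat \<Rightarrow> nat) \<Rightarrow> real \<Rightarrow> real" where
  "eta_inv lam y T i z v = (THE t. t \<in> {0..T} \<and> eta lam y i z t = v)"

definition interp_I :: "nat \<Rightarrow> nat \<Rightarrow> nat \<Rightarrow> (nat \<Rightarrow> nat \<Rightarrow> int) \<Rightarrow> (nat \<Rightarrow> nat) \<Rightarrow> real
    \<Rightarrow> (real \<Rightarrow> (nat \<Rightarrow> nat) \<Rightarrow> (nat \<Rightarrow> nat) \<Rightarrow> nat \<Rightarrow> real)
    \<Rightarrow> (nat \<Rightarrow> 'a \<Rightarrow> nat \<Rightarrow> nat) \<Rightarrow> (nat \<Rightarrow> 'a \<Rightarrow> nat \<Rightarrow> nat) \<Rightarrow> (nat \<Rightarrow> nat \<Rightarrow> 'a \<Rightarrow> real)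
    \<Rightarrow> 'a \<Rightarrow> real \<Rightarrow> nat \<Rightarrow> nat" where
  "interp_I n1 m1 m2 \<nu> y T lam Zf Kp \<zeta> \<omega> t i =
     (let z = Ztil0 n1 m1 m2 \<nu> y Zf Kp \<omega> in
      if i < m1 + m2 then
        card {l. l < Kfull n1 m1 m2 \<nu> y Zf Kp \<omega> i \<and>
                 eta_inv lam y T i z (\<zeta> i l \<omega> * eta lam y i z T) \<le> t}
      else 0)"

(* index set for the independence structure under P_0( . | O_p) *)
datatype src = Lab | Filt nat | Unif nat nat

definition src_sigma :: "'a measure \<Rightarrow> ('a \<Rightarrow> nat \<Rightarrow> nat) \<Rightarrow> ('a \<Rightarrow> real \<Rightarrow> nat \<Rightarrow> nat) \<Rightarrow> real
    \<Rightarrow> (nat \<Rightarrow> 'a \<Rightarrow> nat \<Rightarrow> nat) \<Rightarrow> (nat \<Rightarrow> 'a \<Rightarrow> nat \<Rightarrow> nat) \<Rightarrow> (nat \<Rightarrow> nat \<Rightarrow> 'a \<Rightarrow> real)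
    \<Rightarrow> src \<Rightarrow> 'a set set" where
  "src_sigma P Z0 R T Zf Kp \<zeta> s = (case s of
      Lab \<Rightarrow> sigma_sets (space P)
               ({{\<omega>\<in>space P. Z0 \<omega> = z} | z. True} \<union>
                {{\<omega>\<in>space P. R \<omega> t i = c} | t i c. t \<in> {0..T}})
    | Filt j \<Rightarrow> sigma_sets (space P) {{\<omega>\<in>space P. Zf j \<omega> = z \<and> Kp j \<omega> = kk} | z kk. True}
    | Unif i l \<Rightarrow> sigma_sets (space P) {{\<omega>\<in>space P. \<zeta> i l \<omega> \<le> c} | c. True})"

end

theory Submission
  imports Defs "HOL-Combinatorics.Multiset_Permutations"
begin


lemma eta_facts:
  fixes f :: "real \<Rightarrow> real" and T :: real
  assumes pos: "\<And>t. t \<in> {0..T} \<Longrightarrow> f t > 0"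
    and int: "set_integrable lborel {0..T} f" and T: "T > 0"
  shows eta_add: "\<And>a b. 0 \<le> a \<Longrightarrow> a \<le> b \<Longrightarrow> b \<le> T \<Longrightarrow>
          (LINT s:{0..b}|lborel. f s) = (LINT s:{0..a}|lborel. f s) + (LINT s:{a..b}|lborel. f s)"
    and eta_pos: "\<And>a b. 0 \<le> a \<Longrightarrow> a < b \<Longrightarrow> b \<le> T \<Longrightarrow> (LINT s:{a..b}|lborel. f s) > 0"
    and eta_cont: "continuous_on {0..T} (\<lambda>t. LINT s:{0..t}|lborel. f s)"
    and eta_zero: "(LINT s:{0..0}|lborel. f s) = 0"
proof -
  have si: "set_integrable lborel {a..b} f" if "0 \<le> a" "b \<le> T" for a b
    by (rule set_integrable_subset[OF int]) (use that in auto)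
  have hk: "(LINT s:{a..b}|lborel. f s) = integral {a..b} f" if "0 \<le> a" "b \<le> T" for a b
    using set_borel_integral_eq_integral(2)[OF si[OF that]] .
  have hki: "f integrable_on {0..T}" using set_borel_integral_eq_integral(1)[OF int] .
  show "(LINT s:{0..b}|lborel. f s) = (LINT s:{0..a}|lborel. f s) + (LINT s:{a..b}|lborel. f s)"
    if "0 \<le> a" "a \<le> b" "b \<le> T" for a b
  proof -
    have "f integrable_on {0..b}"
      by (rule integrable_on_subinterval[OF hki]) (use that in auto)
    then have "integral {0..a} f + integral {a..b} f = integral {0..b} f"
      using that by (intro Henstock_Kurzweil_Integration.integral_combine) auto
    then show ?thesis using that by (simp add: hk)
  qed
  show "(LINT s:{0..0}|lborel. f s) = 0" using hk[of 0 0] T by simp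
  show "continuous_on {0..T} (\<lambda>t. LINT s:{0..t}|lborel. f s)"
  proof -
    have "continuous_on {0..T} (\<lambda>t. integral {0..t} f)"
      by (rule indefinite_integral_continuous_1[OF hki])
    then show ?thesis
      by (rule continuous_on_cong[THEN iffD1, rotated 2]) (auto simp: hk)
  qed
  show "(LINT s:{a..b}|lborel. f s) > 0" if ab: "0 \<le> a" "a < b" "b \<le> T" for a b
  proof -
    let ?g = "\<lambda>x. indicator {a..b} x *\<^sub>R f x"
    have ig: "integrable lborel ?g" using si[of a b] ab unfolding set_integrable_def by simp
    have nn: "AE x in lborel. 0 \<le> ?g x"
      using pos ab by (auto simp: indicator_def intro!: less_imp_le)
    have ge: "(LINT s:{a..b}|lborel. f s) \<ge> 0"
      unfolding set_lebesgue_integral_def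
      by (rule integral_nonneg_AE[OF nn])
    moreover have "(LINT s:{a..b}|lborel. f s) \<noteq> 0"
    proof
      assume "(LINT s:{a..b}|lborel. f s) = 0"
      then have "AE x in lborel. ?g x = 0"
        unfolding set_lebesgue_integral_def
        using integral_nonneg_eq_0_iff_AE[OF ig nn] by simp
      then have "AE x in lborel. x \<notin> {a..b}"
      proof eventually_elim
        case (elim x)
        show ?case
        proof
          assume x: "x \<in> {a..b}"
          then have "f x > 0" using pos ab by auto
          with elim x show False by (simp add: indicator_def)
        qed
      qed
      then have "emeasure lborel {a..b} = 0"
        by (subst (asm) AE_iff_measurable[OF _ refl]) (auto simp: atLeastAtMost_def atLeast_def atMost_def Collect_conj_eq)
      with ab show False by simp
    qed
    ultimately show ?thesis by simp
  qed
qed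

lemma prod_nth_count:
  fixes w :: "nat \<Rightarrow> real"
  assumes "set xs \<subseteq> {..<r}"
  shows "(\<Prod>l<length xs. w (xs!l)) = (\<Prod>j<r. w j ^ count (mset xs) j)"
  using assms
proof (induction xs)
  case Nil then show ?case by simp
next
  case (Cons x xs)
  have x: "x < r" using Cons.prems by auto
  have "(\<Prod>l<length (x#xs). w ((x#xs)!l)) = w x * (\<Prod>l<length xs. w (xs!l))"
    by (simp only: length_Cons prod.lessThan_Suc_shift) simp
  also have "\<dots> = w x * (\<Prod>j<r. w j ^ count (mset xs) j)" using Cons by auto
  also have "\<dots> = (\<Prod>j<r. (if j = x then w j else 1)) * (\<Prod>j<r. w j ^ count (mset xs) j)"
    using x by (simp add: prod.delta)
  also have "\<dots> = (\<Prod>j<r. (if j = x then w j else 1) * w j ^ count (mset xs) j)"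
    by (simp add: prod.distrib)
  also have "\<dots> = (\<Prod>j<r. w j ^ count (mset (x#xs)) j)"
    by (intro prod.cong) auto
  finally show ?case .
qed

lemma card_perms_real:
  fixes A :: "nat multiset"
  assumes "set_mset A \<subseteq> {..<r}"
  shows "real (card (permutations_of_multiset A)) = fact (size A) / (\<Prod>j<r. fact (count A j))"
proof -
  have "(\<Prod>j<r. fact (count A j) :: nat) = (\<Prod>x\<in>set_mset A. fact (count A x))"
    using assms by (intro prod.mono_neutral_right) (auto simp: not_in_iff)
  then have "card (permutations_of_multiset A) * (\<Prod>j<r. fact (count A j) :: nat) = fact (size A)"
    using card_permutations_of_multiset_aux[of A] by simp
  then have "real (card (permutations_of_multiset A)) * (\<Prod>j<r. fact (count A j)) = fact (size A)"
    by (metis (mono_tags, lifting) of_nat_fact of_nat_mult of_nat_prod prod.cong)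
  moreover have "(\<Prod>j<r. fact (count A j) :: real) \<noteq> 0" by simp
  ultimately show ?thesis by (simp add: field_simps)
qed

lemma sum_perms:
  fixes w :: "nat \<Rightarrow> real" and A :: "nat multiset"
  assumes "set_mset A \<subseteq> {..<r}"
  shows "(\<Sum>xs\<in>permutations_of_multiset A. \<Prod>l<length xs. w (xs!l))
         = real (card (permutations_of_multiset A)) * (\<Prod>j<r. w j ^ count A j)"
proof -
  have "(\<Sum>xs\<in>permutations_of_multiset A. \<Prod>l<length xs. w (xs!l))
        = (\<Sum>xs\<in>permutations_of_multiset A. \<Prod>j<r. w j ^ count A j)"
  proof (intro sum.cong refl)
    fix xs assume "xs \<in> permutations_of_multiset A"
    then have "mset xs = A" by (rule permutations_of_multisetD)
    then show "(\<Prod>l<length xs. w (xs!l)) = (\<Prod>j<r. w j ^ count A j)"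
      using prod_nth_count[of xs r w] assms by auto
  qed
  then show ?thesis by simp
qed

lemma poisson_ratio:
  fixes L :: "nat \<Rightarrow> real" and a :: "nat \<Rightarrow> nat"
  assumes pos: "(\<Sum>j<r. L j) > 0"
  shows "(\<Prod>j<r. poisson_prob (L j) (a j)) / poisson_prob (\<Sum>j<r. L j) (\<Sum>j<r. a j)
         = fact (\<Sum>j<r. a j) / (\<Prod>j<r. fact (a j)) * (\<Prod>j<r. (L j / (\<Sum>j<r. L j)) ^ a j)"
proof -
  define S where "S = (\<Sum>j<r. L j)"
  have "(\<Prod>j<r. poisson_prob (L j) (a j)) = (\<Prod>j<r. exp (- L j)) * (\<Prod>j<r. L j ^ a j) / (\<Prod>j<r. fact (a j))"
    unfolding poisson_prob_def by (simp add: prod.distrib prod_dividef)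
  also have "(\<Prod>j<r. exp (- L j)) = exp (- S)"
    unfolding S_def by (simp add: exp_sum[symmetric] sum_negf)
  finally have 1: "(\<Prod>j<r. poisson_prob (L j) (a j)) = exp (- S) * (\<Prod>j<r. L j ^ a j) / (\<Prod>j<r. fact (a j))" .
  have 2: "(\<Prod>j<r. (L j / S) ^ a j) = (\<Prod>j<r. L j ^ a j) / S ^ (\<Sum>j<r. a j)"
    by (simp add: power_divide prod_dividef power_sum)
  have Sp: "S > 0" using pos S_def by simp
  have f0: "(\<Prod>j<r. fact (a j) :: real) \<noteq> 0" by simp
  show ?thesis
    unfolding S_def[symmetric] 1 2
    using Sp f0 by (simp add: field_simps poisson_prob_def)
qed

lemma uniform_measure_null_cong:
  assumes A: "A \<in> sets M" and B: "B \<in> sets M"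
    and n1: "emeasure M (A - B) = 0" and n2: "emeasure M (B - A) = 0"
  shows "uniform_measure M A = uniform_measure M B"
proof -
  have ae: "AE x in M. x \<in> A \<longleftrightarrow> x \<in> B"
  proof -
    have "AE x in M. x \<notin> A - B" using n1 A B by (intro AE_not_in) auto
    moreover have "AE x in M. x \<notin> B - A" using n2 A B by (intro AE_not_in) auto
    ultimately show ?thesis by eventually_elim auto
  qed
  have e: "emeasure M A = emeasure M B" by (rule emeasure_eq_AE[OF ae A B])
  show ?thesis
  proof (rule measure_eqI)
    fix X assume X: "X \<in> sets (uniform_measure M A)"
    then have X': "X \<in> sets M" by simp
    have "emeasure M (A \<inter> X) = emeasure M (B \<inter> X)"
      by (rule emeasure_eq_AE) (use ae A B X' in auto)
    then show "emeasure (uniform_measure M A) X = emeasure (uniform_measure M B) X"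
      using A B X' e by simp
  qed simp
qed

lemma countable_vecs: "countable (vecs d :: (nat \<Rightarrow> nat) set)"
proof -
  have "vecs d \<subseteq> (\<lambda>xs i. if i < length xs then xs!i else (0::nat)) ` UNIV"
  proof
    fix x :: "nat \<Rightarrow> nat" assume x: "x \<in> vecs d"
    have "x = (\<lambda>i. if i < length (map x [0..<d]) then map x [0..<d] ! i else 0)"
      using x by (auto simp: vecs_def fun_eq_iff)
    then show "x \<in> range (\<lambda>xs i. if i < length xs then xs!i else (0::nat))" by blast
  qed
  then show ?thesis by (rule countable_subset) simp
qed



lemma sum_lessThan_add_split: "sum f {..<a+(b::nat)} = sum f {..<a} + (\<Sum>j<b. f (a+j))"
  by (induction b) (auto simp: add.assoc)

locale P3 =
  fixes n1 n2 m1 m2 :: nat and T :: real and y :: "nat \<Rightarrow> nat"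
    and \<nu> :: "nat \<Rightarrow> nat \<Rightarrow> int"
    and lam :: "real \<Rightarrow> (nat \<Rightarrow> nat) \<Rightarrow> (nat \<Rightarrow> nat) \<Rightarrow> nat \<Rightarrow> real"
    and \<mu> :: "(nat \<Rightarrow> nat) pmf"
    and P0 :: "'a measure"
    and Z0 :: "'a \<Rightarrow> nat \<Rightarrow> nat" and R :: "'a \<Rightarrow> real \<Rightarrow> nat \<Rightarrow> nat" and Op :: "'a set"
    and Zf :: "nat \<Rightarrow> 'a \<Rightarrow> nat \<Rightarrow> nat" and Kp :: "nat \<Rightarrow> 'a \<Rightarrow> nat \<Rightarrow> nat"
    and \<zeta> :: "nat \<Rightarrow> nat \<Rightarrow> 'a \<Rightarrow> real"
    and \<phi> :: "(real \<Rightarrow> nat \<Rightarrow> real) \<Rightarrow> real"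
    and k z0 :: "nat \<Rightarrow> nat"
  assumes dims: "n2 = m2"
    and T_pos: "T > 0"
    and y_vec: "y \<in> vecs n2"
    and B_inv: "block_invertible n1 m1 m2 \<nu>"
    and lam_pos: "\<forall>t\<in>{0..T}. \<forall>z\<in>vecs (n1+n2). \<forall>yy\<in>vecs n2. \<forall>i<m1+m2. lam t z yy i > 0"
    and lam_int: "\<forall>z\<in>vecs (n1+n2). \<forall>yy\<in>vecs n2. \<forall>i<m1+m2.
                    set_integrable lborel {0..T} (\<lambda>t. lam t z yy i)"
    and mu_vec: "set_pmf \<mu> \<subseteq> vecs (n1+n2)"
    and P0: "prob_space P0"
    and lab_vals: "\<forall>\<omega>\<in>space P0. Z0 \<omega> \<in> vecs (n1+n2) \<and> counting_path (m1+m2) T (R \<omega>)"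
    and Op_ev: "Op \<in> sets P0" and Op_pos: "measure P0 Op > 0"
    and Z0_law: "\<forall>z. measure P0 (Op \<inter> {\<omega>\<in>space P0. Z0 \<omega> = z}) = measure P0 Op * pmf \<mu> z"
    and R_law: "\<forall>z\<in>vecs (n1+n2). cond_poisson_process P0 (Op \<inter> {\<omega>\<in>space P0. Z0 \<omega> = z}) R (m1+m2) T
                    (\<lambda>i t. lam t z y i)"
    and filt_vals: "\<forall>\<omega>\<in>space P0. \<forall>i. Zf i \<omega> \<in> vecs (n1+n2) \<and> Kp i \<omega> \<in> vecs m1"
    and filt_law: "\<forall>i z. \<forall>kk\<in>vecs m1.
        measure P0 (Op \<inter> {\<omega>\<in>space P0. Zf i \<omega> = z \<and> Kp i \<omega> = kk})
        = measure P0 Op * pmf \<mu> z * (\<Prod>j<m1. poisson_prob (LINT t:{0..T}|lborel. lam t z y j) (kk j))"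
    and zeta_law: "\<forall>i l c. 0 \<le> c \<and> c \<le> 1 \<longrightarrow>
        measure P0 (Op \<inter> {\<omega>\<in>space P0. \<zeta> i l \<omega> \<le> c}) = measure P0 Op * c"
    and indep: "prob_space.indep_sets (uniform_measure P0 Op) (src_sigma P0 Z0 R T Zf Kp \<zeta>) UNIV"
    and O_pos: "measure P0 (Op \<inter> obs_event P0 n1 n2 (m1+m2) \<nu> y Z0 R T) > 0"
    and phi_meas: "\<phi> \<in> borel_measurable (path_space (m1+m2) T)"
    and phi_nonneg: "\<forall>p\<in>space (path_space (m1+m2) T). 0 \<le> \<phi> p"
    and k_vec: "k \<in> vecs (m1+m2)" and z0_vec: "z0 \<in> vecs (n1+n2)"
    and condR_pos: "measure P0 ({\<omega>\<in>space P0. R \<omega> T = k \<and> Z0 \<omega> = z0}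
                       \<inter> (Op \<inter> obs_event P0 n1 n2 (m1+m2) \<nu> y Z0 R T)) > 0"
    and condI_pos: "measure P0 ({\<omega>\<in>space P0. interp_I n1 m1 m2 \<nu> y T lam Zf Kp \<zeta> \<omega> T = k
                                  \<and> Ztil0 n1 m1 m2 \<nu> y Zf Kp \<omega> = z0}
                       \<inter> (Op \<inter> obs_event P0 n1 n2 (m1+m2) \<nu> y Z0 R T)) > 0"
begin

abbreviation "m \<equiv> m1 + m2"
abbreviation "M \<equiv> uniform_measure P0 Op"
abbreviation "SS \<equiv> src_sigma P0 Z0 R T Zf Kp \<zeta>"
abbreviation "Obs \<equiv> obs_event P0 n1 n2 (m1+m2) \<nu> y Z0 R T"

lemma P0_prob: "prob_space P0" by (rule P0)

lemma M_prob: "prob_space M"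
proof -
  interpret prob_space P0 by (rule P0)
  show ?thesis
    using Op_pos Op_ev by (intro prob_space_uniform_measure) (auto simp: emeasure_eq_measure)
qed

lemma SS_events: "SS s \<subseteq> sets P0"
proof -
  interpret Mp: prob_space M by (rule M_prob)
  from indep have "SS s \<subseteq> Mp.events" unfolding Mp.indep_sets_def by auto
  then show ?thesis by simp
qed

lemma SS_sigma: "sigma_algebra (space P0) (SS s)"
  unfolding src_sigma_def by (cases s) (auto intro!: sigma_algebra_sigma_sets)

lemma Z0_ev: "{\<omega>\<in>space P0. Z0 \<omega> = z} \<in> SS Lab"
  unfolding src_sigma_def by (auto intro!: sigma_sets.Basic)

lemma R_ev: "t \<in> {0..T} \<Longrightarrow> {\<omega>\<in>space P0. R \<omega> t i = c} \<in> SS Lab"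
  unfolding src_sigma_def by (auto intro!: sigma_sets.Basic)

lemma F_ev: "{\<omega>\<in>space P0. Zf j \<omega> = z \<and> Kp j \<omega> = kk} \<in> SS (Filt j)"
  unfolding src_sigma_def by (auto intro!: sigma_sets.Basic)

lemma U_ev: "{\<omega>\<in>space P0. \<zeta> i l \<omega> \<le> c} \<in> SS (Unif i l)"
  unfolding src_sigma_def by (auto intro!: sigma_sets.Basic)

lemma in_P0: "X \<in> SS s \<Longrightarrow> X \<in> sets P0" using SS_events by auto

lemma zeta_meas: "\<zeta> i l \<in> borel_measurable P0"
  unfolding borel_measurable_iff_le using U_ev in_P0 by blast

lemma R_meas: "t \<in> {0..T} \<Longrightarrow> (\<lambda>\<omega>. R \<omega> t i) \<in> measurable P0 (count_space UNIV)"
  unfolding measurable_count_space_eq2_countable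
  using R_ev in_P0 by (auto simp: vimage_def Int_def conj_commute)

lemma lamp: "i < m \<Longrightarrow> t \<in> {0..T} \<Longrightarrow> lam t z0 y i > 0"
  using lam_pos z0_vec y_vec by auto

lemma lami: "i < m \<Longrightarrow> set_integrable lborel {0..T} (\<lambda>t. lam t z0 y i)"
  using lam_int z0_vec y_vec by auto

definition Lam :: "nat \<Rightarrow> real \<Rightarrow> real \<Rightarrow> real" where
  "Lam i a b = (LINT u:{a..b}|lborel. lam u z0 y i)"

abbreviation "et i t \<equiv> eta lam y i z0 t"

lemma et_add: "i < m \<Longrightarrow> 0 \<le> a \<Longrightarrow> a \<le> b \<Longrightarrow> b \<le> T \<Longrightarrow> et i b = et i a + Lam i a b"
  unfolding eta_def Lam_def
  by (rule eta_add[OF lamp lami T_pos]) auto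

lemma et_zero: "i < m \<Longrightarrow> et i 0 = 0"
  unfolding eta_def
  by (rule eta_zero[OF lamp lami T_pos]) auto

lemma Lam_pos: "i < m \<Longrightarrow> 0 \<le> a \<Longrightarrow> a < b \<Longrightarrow> b \<le> T \<Longrightarrow> Lam i a b > 0"
  unfolding Lam_def
  by (rule eta_pos[OF lamp lami T_pos]) auto

lemma et_cont: "i < m \<Longrightarrow> continuous_on {0..T} (et i)"
  unfolding eta_def
  by (rule eta_cont[OF lamp lami T_pos]) auto

lemma et_strict: "i < m \<Longrightarrow> 0 \<le> a \<Longrightarrow> a < b \<Longrightarrow> b \<le> T \<Longrightarrow> et i a < et i b"
  using et_add[of i a b] Lam_pos[of i a b] by auto

lemma et_mono: "i < m \<Longrightarrow> 0 \<le> a \<Longrightarrow> a \<le> b \<Longrightarrow> b \<le> T \<Longrightarrow> et i a \<le> et i b"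
  using et_strict[of i a b] by (cases "a = b") auto

lemma et_T_pos: "i < m \<Longrightarrow> et i T > 0"
  using et_strict[of i 0 T] et_zero[of i] T_pos by auto

lemma et_le_iff:
  assumes i: "i < m" and a: "a \<in> {0..T}" and b: "b \<in> {0..T}"
  shows "et i a \<le> et i b \<longleftrightarrow> a \<le> b"
  proof (cases "a \<le> b")
    case True
    then show ?thesis using et_mono[OF i, of a b] a b by simp
  next
    case False
    then have "b < a" by simp
    then have "et i b < et i a" using et_strict[OF i, of b a] a b by simp
    then show ?thesis using False by simp
  qed

lemma eta_inv_props:
  assumes i: "i < m" and v: "0 \<le> v" "v \<le> et i T"
  shows "eta_inv lam y T i z0 v \<in> {0..T}" "et i (eta_inv lam y T i z0 v) = v"
proof -
  have e0: "et i 0 \<le> v" using et_zero[OF i] v by simp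
  have "\<exists>x. 0 \<le> x \<and> x \<le> T \<and> et i x = v"
    by (rule IVT'[OF e0 v(2) _ et_cont[OF i]]) (use T_pos in simp)
  then obtain s where s: "0 \<le> s" "s \<le> T" "et i s = v" by blast
  have u: "\<And>t. t \<in> {0..T} \<and> et i t = v \<Longrightarrow> t = s"
  proof -
    fix t assume t: "t \<in> {0..T} \<and> et i t = v"
    have s': "s \<in> {0..T}" using s by auto
    have t': "t \<in> {0..T}" using t by simp
    have "t \<le> s" using et_le_iff[OF i t' s'] t s by simp
    moreover have "s \<le> t" using et_le_iff[OF i s' t'] t s by simp
    ultimately show "t = s" by simp
  qed
  have "eta_inv lam y T i z0 v = s"
    unfolding eta_inv_def
  proof (rule the_equality)
    show "s \<in> {0..T} \<and> et i s = v" using s by simp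
  qed (rule u)
  then show "eta_inv lam y T i z0 v \<in> {0..T}" "et i (eta_inv lam y T i z0 v) = v" using s by auto
qed

lemma eta_inv_le:
  assumes i: "i < m" and v: "0 \<le> v" "v \<le> et i T" and t: "t \<in> {0..T}"
  shows "eta_inv lam y T i z0 v \<le> t \<longleftrightarrow> v \<le> et i t"
proof -
  note p = eta_inv_props[OF i v]
  have "et i (eta_inv lam y T i z0 v) \<le> et i t \<longleftrightarrow> eta_inv lam y T i z0 v \<le> t"
    by (rule et_le_iff[OF i p(1) t])
  then show ?thesis using p(2) by simp
qed

definition "ER = {\<omega>\<in>space P0. R \<omega> T = k \<and> Z0 \<omega> = z0} \<inter> (Op \<inter> Obs)"
definition "kp = (\<lambda>j. if j < m1 then k j else (0::nat))"

lemma ER_nonempty: "ER \<noteq> {}"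
  using condR_pos unfolding ER_def by auto

lemma obs_k: "i < n2 \<Longrightarrow> int (z0 (n1+i)) + (\<Sum>j<m. \<nu> (n1+i) j * int (k j)) = int (y i)"
proof -
  assume i: "i < n2"
  obtain \<omega> where "\<omega> \<in> ER" using ER_nonempty by blast
  then show ?thesis using i unfolding ER_def obs_event_def by auto
qed

lemma obs_of: "\<omega> \<in> space P0 \<Longrightarrow> Z0 \<omega> = z0 \<Longrightarrow> R \<omega> T = k \<Longrightarrow> \<omega> \<in> Obs"
  unfolding obs_event_def using obs_k by auto

lemma Gvec_k: "Gvec n1 m1 m2 \<nu> (obs_gap n1 y z0) kp = (\<lambda>i. if i < m2 then real (k (m1+i)) else 0)"
proof -
  define x0 where "x0 = (\<lambda>i. if i < m2 then real (k (m1+i)) else 0)"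
  define v where "v = (\<lambda>i. real_of_int (obs_gap n1 y z0 i) - (\<Sum>j<m1. real_of_int (\<nu> (n1+i) j) * real (kp j)))"
  have x0v: "x0 \<in> vecs m2" unfolding x0_def vecs_def by auto
  have x0e: "\<forall>i<m2. (\<Sum>j<m2. real_of_int (\<nu> (n1+i) (m1+j)) * x0 j) = v i"
  proof (intro allI impI)
    fix i assume i: "i < m2"
    have "int (z0 (n1+i)) + (\<Sum>j<m. \<nu> (n1+i) j * int (k j)) = int (y i)"
      using obs_k[of i] i dims by simp
    then have "real_of_int (int (z0 (n1+i)) + (\<Sum>j<m. \<nu> (n1+i) j * int (k j))) = real_of_int (int (y i))"
      by (simp only:)
    then have "real (z0 (n1+i)) + (\<Sum>j<m. real_of_int (\<nu> (n1+i) j) * real (k j)) = real (y i)"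
      by (simp add: of_int_sum)
    then have "real (z0 (n1+i)) + (\<Sum>j<m1. real_of_int (\<nu> (n1+i) j) * real (k j))
           + (\<Sum>j<m2. real_of_int (\<nu> (n1+i) (m1+j)) * real (k (m1+j))) = real (y i)"
      by (simp add: sum_lessThan_add_split)
    moreover have "(\<Sum>j<m1. real_of_int (\<nu> (n1+i) j) * real (kp j)) = (\<Sum>j<m1. real_of_int (\<nu> (n1+i) j) * real (k j))"
      unfolding kp_def by simp
    moreover have "(\<Sum>j<m2. real_of_int (\<nu> (n1+i) (m1+j)) * x0 j) = (\<Sum>j<m2. real_of_int (\<nu> (n1+i) (m1+j)) * real (k (m1+j)))"
      unfolding x0_def by simp
    ultimately show "(\<Sum>j<m2. real_of_int (\<nu> (n1+i) (m1+j)) * x0 j) = v i"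
      unfolding v_def obs_gap_def by simp
  qed
  obtain x1 where x1: "x1 \<in> vecs m2 \<and> (\<forall>i<m2. (\<Sum>j<m2. real_of_int (\<nu> (n1+i) (m1+j)) * x1 j) = v i)"
    and x1u: "\<And>x. x \<in> vecs m2 \<and> (\<forall>i<m2. (\<Sum>j<m2. real_of_int (\<nu> (n1+i) (m1+j)) * x j) = v i) \<Longrightarrow> x = x1"
  proof -
    have "\<exists>!x::nat\<Rightarrow>real. x \<in> vecs m2 \<and> (\<forall>i<m2. (\<Sum>j<m2. real_of_int (\<nu> (n1+i) (m1+j)) * x j) = v i)"
      using B_inv unfolding block_invertible_def by (rule spec)
    then have "\<exists>x1. (x1 \<in> vecs m2 \<and> (\<forall>i<m2. (\<Sum>j<m2. real_of_int (\<nu> (n1+i) (m1+j)) * x1 j) = v i)) \<and>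
       (\<forall>x. x \<in> vecs m2 \<and> (\<forall>i<m2. (\<Sum>j<m2. real_of_int (\<nu> (n1+i) (m1+j)) * x j) = v i) \<longrightarrow> x = x1)"
      by (simp only: Ex1_def)
    then show ?thesis using that by blast
  qed
  have "x0 = x1" using x1u x0v x0e by blast
  have "Gvec n1 m1 m2 \<nu> (obs_gap n1 y z0) kp = x0"
    unfolding Gvec_def
  proof (rule the_equality)
    show "x0 \<in> vecs m2 \<and> (\<forall>i<m2. (\<Sum>j<m2. real_of_int (\<nu> (n1+i) (m1+j)) * x0 j) =
           real_of_int (obs_gap n1 y z0 i) - (\<Sum>j<m1. real_of_int (\<nu> (n1+i) j) * real (kp j)))"
      using x0v x0e unfolding v_def by simp
  next
    fix x assume "x \<in> vecs m2 \<and> (\<forall>i<m2. (\<Sum>j<m2. real_of_int (\<nu> (n1+i) (m1+j)) * x j) =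
           real_of_int (obs_gap n1 y z0 i) - (\<Sum>j<m1. real_of_int (\<nu> (n1+i) j) * real (kp j)))"
    then have "x = x1" using x1u unfolding v_def by simp
    then show "x = x0" using \<open>x0 = x1\<close> by simp
  qed
  then show ?thesis unfolding x0_def .
qed

lemma kp_vec: "kp \<in> vecs m1" unfolding kp_def vecs_def by auto

lemma kp_S: "kp \<in> Sset n1 m1 m2 \<nu> (obs_gap n1 y z0)"
  unfolding Sset_def using kp_vec Gvec_k by auto

abbreviation "Pn \<omega> i \<equiv> Kp i \<omega> \<in> Sset n1 m1 m2 \<nu> (obs_gap n1 y (Zf i \<omega>))"
abbreviation "sel \<omega> \<equiv> sel_index n1 m1 m2 \<nu> y Zf Kp \<omega>"
abbreviation "Zt \<omega> \<equiv> Ztil0 n1 m1 m2 \<nu> y Zf Kp \<omega>"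
abbreviation "Kf \<omega> \<equiv> Kfull n1 m1 m2 \<nu> y Zf Kp \<omega>"
abbreviation "II \<omega> \<equiv> interp_I n1 m1 m2 \<nu> y T lam Zf Kp \<zeta> \<omega>"

definition "Fn n = {\<omega>\<in>space P0. (\<forall>j<n. \<not> Pn \<omega> j) \<and> Zf n \<omega> = z0 \<and> Kp n \<omega> = kp} \<inter> (Op \<inter> Obs)"
definition "FF = (\<Union>n. Fn n)"
definition "Gall = {\<omega>\<in>space P0. \<forall>i<m. \<forall>l. 0 < \<zeta> i l \<omega> \<and> \<zeta> i l \<omega> \<le> 1}"
definition "Gk = {\<omega>\<in>space P0. \<forall>i<m. \<forall>l<k i. 0 < \<zeta> i l \<omega> \<and> \<zeta> i l \<omega> \<le> 1}"
definition "EI = {\<omega>\<in>space P0. II \<omega> T = k \<and> Zt \<omega> = z0} \<inter> (Op \<inter> Obs)"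
definition "Jp \<omega> t i = (if i < m then card {l. l < k i \<and> \<zeta> i l \<omega> \<le> et i t / et i T} else 0)"

lemma Fn_sel: "\<omega> \<in> Fn n \<Longrightarrow> sel \<omega> = n"
  unfolding sel_index_def Fn_def using kp_S
  by (intro Least_equality) (auto simp: not_less[symmetric])

lemma Fn_Z: "\<omega> \<in> Fn n \<Longrightarrow> Zt \<omega> = z0"
  unfolding Ztil0_def using Fn_sel[of \<omega> n] by (simp add: Fn_def)

lemma Fn_K: "\<omega> \<in> Fn n \<Longrightarrow> Kf \<omega> = k"
proof
  fix j assume w: "\<omega> \<in> Fn n"
  have s: "sel \<omega> = n" using Fn_sel[OF w] .
  have z: "Zf n \<omega> = z0" "Kp n \<omega> = kp" using w by (auto simp: Fn_def)
  show "Kf \<omega> j = k j"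
  proof (cases "j < m1")
    case True then show ?thesis unfolding Kfull_def Let_def s z kp_def by simp
  next
    case False
    show ?thesis
    proof (cases "j < m")
      case True
      then have "j - m1 < m2" using False by simp
      then have "Gvec n1 m1 m2 \<nu> (obs_gap n1 y z0) kp (j - m1) = real (k j)"
        using Gvec_k False by simp
      then show ?thesis unfolding Kfull_def Let_def s z using False True by simp
    next
      case False2: False
      then have "k j = 0" using k_vec unfolding vecs_def by auto
      then show ?thesis unfolding Kfull_def Let_def s z using False False2 by simp
    qed
  qed
qed

lemma Fn_disj: "n \<noteq> n' \<Longrightarrow> Fn n \<inter> Fn n' = {}"
  using Fn_sel by blast

lemma interp_good:
  assumes w: "\<omega> \<in> space P0" and z: "Zt \<omega> = z0"
    and g: "\<forall>i<m. \<forall>l<Kf \<omega> i. 0 < \<zeta> i l \<omega> \<and> \<zeta> i l \<omega> \<le> 1" and t: "t \<in> {0..T}"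
  shows "II \<omega> t i = (if i < m then card {l. l < Kf \<omega> i \<and> \<zeta> i l \<omega> \<le> et i t / et i T} else 0)"
proof (cases "i < m")
  case True
  have "{l. l < Kf \<omega> i \<and> eta_inv lam y T i z0 (\<zeta> i l \<omega> * et i T) \<le> t}
       = {l. l < Kf \<omega> i \<and> \<zeta> i l \<omega> \<le> et i t / et i T}"
  proof (intro Collect_cong conj_cong refl)
    fix l assume l: "l < Kf \<omega> i"
    have p: "0 < \<zeta> i l \<omega>" "\<zeta> i l \<omega> \<le> 1" using g True l by auto
    have eT: "et i T > 0" using et_T_pos[OF True] .
    have v: "0 \<le> \<zeta> i l \<omega> * et i T" "\<zeta> i l \<omega> * et i T \<le> et i T"
      using p eT by (auto simp: mult_le_cancel_right1)
    have "eta_inv lam y T i z0 (\<zeta> i l \<omega> * et i T) \<le> t \<longleftrightarrow> \<zeta> i l \<omega> * et i T \<le> et i t"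
      by (rule eta_inv_le[OF True v t])
    also have "\<dots> \<longleftrightarrow> \<zeta> i l \<omega> \<le> et i t / et i T"
      using eT by (simp add: pos_le_divide_eq)
    finally show "eta_inv lam y T i z0 (\<zeta> i l \<omega> * et i T) \<le> t \<longleftrightarrow> \<zeta> i l \<omega> \<le> et i t / et i T" .
  qed
  then show ?thesis unfolding interp_I_def Let_def z using True by simp
next
  case False
  then show ?thesis unfolding interp_I_def Let_def by simp
qed

lemma interp_good_T:
  assumes w: "\<omega> \<in> space P0" and z: "Zt \<omega> = z0"
    and g: "\<forall>i<m. \<forall>l<Kf \<omega> i. 0 < \<zeta> i l \<omega> \<and> \<zeta> i l \<omega> \<le> 1"
  shows "II \<omega> T i = (if i < m then Kf \<omega> i else 0)"
proof -
  have t: "T \<in> {0..T}" using T_pos by simp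
  show ?thesis
  proof (cases "i < m")
    case True
    have eT: "et i T > 0" using et_T_pos[OF True] .
    have "{l. l < Kf \<omega> i \<and> \<zeta> i l \<omega> \<le> et i T / et i T} = {l. l < Kf \<omega> i}"
      using g True eT by auto
    then show ?thesis using interp_good[OF w z g t, of i] True by simp
  next
    case False
    then show ?thesis using interp_good[OF w z g t, of i] by simp
  qed
qed

lemma EI_Gall_sub: "EI \<inter> Gall \<subseteq> FF"
proof
  fix \<omega> assume w: "\<omega> \<in> EI \<inter> Gall"
  have sp: "\<omega> \<in> space P0" and z: "Zt \<omega> = z0" and IT: "II \<omega> T = k" and o: "\<omega> \<in> Op \<inter> Obs"
    using w by (auto simp: EI_def)
  have g: "\<forall>i<m. \<forall>l<Kf \<omega> i. 0 < \<zeta> i l \<omega> \<and> \<zeta> i l \<omega> \<le> 1" using w by (auto simp: Gall_def)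
  define N where "N = sel \<omega>"
  have zN: "Zf N \<omega> = z0" using z unfolding Ztil0_def N_def by simp
  have KN: "Kf \<omega> i = k i" if "i < m" for i
    using interp_good_T[OF sp z g, of i] IT that by simp
  have KpN: "Kp N \<omega> = kp"
  proof
    fix j show "Kp N \<omega> j = kp j"
    proof (cases "j < m1")
      case True
      then have "Kf \<omega> j = Kp N \<omega> j" unfolding Kfull_def Let_def N_def by simp
      then show ?thesis using KN[of j] True unfolding kp_def by simp
    next
      case False
      then show ?thesis using filt_vals sp unfolding kp_def vecs_def by auto
    qed
  qed
  have PN: "Pn \<omega> N" using zN KpN kp_S by simp
  have NL: "N = (LEAST i. Pn \<omega> i)" unfolding N_def sel_index_def ..
  have "\<forall>j<N. \<not> Pn \<omega> j" using not_less_Least NL by blast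
  then have "\<omega> \<in> Fn N" unfolding Fn_def using sp zN KpN o by simp
  then show "\<omega> \<in> FF" unfolding FF_def by blast
qed

lemma FF_Gk_sub: "FF \<inter> Gk \<subseteq> EI"
proof
  fix \<omega> assume w: "\<omega> \<in> FF \<inter> Gk"
  then obtain n where wn: "\<omega> \<in> Fn n" unfolding FF_def by blast
  have sp: "\<omega> \<in> space P0" and o: "\<omega> \<in> Op \<inter> Obs" using wn by (auto simp: Fn_def)
  have z: "Zt \<omega> = z0" using Fn_Z[OF wn] .
  have K: "Kf \<omega> = k" using Fn_K[OF wn] .
  have g: "\<forall>i<m. \<forall>l<Kf \<omega> i. 0 < \<zeta> i l \<omega> \<and> \<zeta> i l \<omega> \<le> 1" using w K by (auto simp: Gk_def)
  have "II \<omega> T = k"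
  proof
    fix i show "II \<omega> T i = k i"
      using interp_good_T[OF sp z g, of i] K k_vec unfolding vecs_def by auto
  qed
  then show "\<omega> \<in> EI" unfolding EI_def using sp z o by simp
qed

lemma I_eq_Jp: "\<omega> \<in> FF \<inter> Gk \<Longrightarrow> t \<in> {0..T} \<Longrightarrow> II \<omega> t = Jp \<omega> t"
proof
  fix i assume w: "\<omega> \<in> FF \<inter> Gk" and t: "t \<in> {0..T}"
  then obtain n where wn: "\<omega> \<in> Fn n" unfolding FF_def by blast
  have sp: "\<omega> \<in> space P0" using wn by (auto simp: Fn_def)
  have z: "Zt \<omega> = z0" using Fn_Z[OF wn] .
  have K: "Kf \<omega> = k" using Fn_K[OF wn] .
  have g: "\<forall>i<m. \<forall>l<Kf \<omega> i. 0 < \<zeta> i l \<omega> \<and> \<zeta> i l \<omega> \<le> 1" using w K by (auto simp: Gk_def)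
  show "II \<omega> t i = Jp \<omega> t i"
    using interp_good[OF sp z g t, of i] K unfolding Jp_def by simp
qed

lemma Z0_vec: "\<omega> \<in> space P0 \<Longrightarrow> Z0 \<omega> \<in> vecs (n1+n2)"
  using lab_vals by blast

lemma R_cp: "\<omega> \<in> space P0 \<Longrightarrow> counting_path m T (R \<omega>)"
  using lab_vals by blast

lemma R_vec: "\<omega> \<in> space P0 \<Longrightarrow> t \<in> {0..T} \<Longrightarrow> R \<omega> t \<in> vecs m"
  using R_cp unfolding counting_path_def by blast

lemma R_zero: "\<omega> \<in> space P0 \<Longrightarrow> R \<omega> 0 = (\<lambda>_. 0)"
  using R_cp unfolding counting_path_def by blast

lemma R_mono: "\<omega> \<in> space P0 \<Longrightarrow> i < m \<Longrightarrow> s \<in> {0..T} \<Longrightarrow> t \<in> {0..T} \<Longrightarrow> s \<le> t \<Longrightarrow> R \<omega> s i \<le> R \<omega> t i"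
proof -
  assume a: "\<omega> \<in> space P0" "i < m" "s \<in> {0..T}" "t \<in> {0..T}" "s \<le> t"
  have "mono_on {0..T} (\<lambda>t. R \<omega> t i)" using R_cp[OF a(1)] a(2) unfolding counting_path_def by blast
  then show ?thesis using a(3-5) by (rule mono_onD)
qed

lemma Zf_vec: "\<omega> \<in> space P0 \<Longrightarrow> Zf j \<omega> \<in> vecs (n1+n2)" using filt_vals by blast
lemma Kp_vec: "\<omega> \<in> space P0 \<Longrightarrow> Kp j \<omega> \<in> vecs m1" using filt_vals by blast

lemma countable_vv: "countable ((vecs a :: (nat \<Rightarrow> nat) set) \<times> (vecs b :: (nat \<Rightarrow> nat) set))"
  using countable_vecs by (intro countable_SIGMA) auto

lemma Obs_SS: "Obs \<in> SS Lab"
proof -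
  interpret S: sigma_algebra "space P0" "SS Lab" by (rule SS_sigma)
  define Q where "Q = {zc \<in> vecs (n1+n2) \<times> vecs m. \<forall>i<n2. int (fst zc (n1+i)) + (\<Sum>j<m. \<nu> (n1+i) j * int (snd zc j)) = int (y i)}"
  have cQ: "countable Q" unfolding Q_def by (rule countable_subset[OF _ countable_vv]) auto
  have "Obs = {\<omega>\<in>space P0. \<exists>zc\<in>Q. Z0 \<omega> = fst zc \<and> (\<forall>j. j < m \<longrightarrow> R \<omega> T j = snd zc j)}"
  proof (intro set_eqI iffI)
    fix \<omega> assume w: "\<omega> \<in> Obs"
    then have sp: "\<omega> \<in> space P0" unfolding obs_event_def by auto
    have "(Z0 \<omega>, R \<omega> T) \<in> Q"
      using w sp Z0_vec R_vec[of \<omega> T] T_pos unfolding Q_def obs_event_def by simp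
    then show "\<omega> \<in> {\<omega>\<in>space P0. \<exists>zc\<in>Q. Z0 \<omega> = fst zc \<and> (\<forall>j. j < m \<longrightarrow> R \<omega> T j = snd zc j)}"
      using sp by force
  next
    fix \<omega> assume "\<omega> \<in> {\<omega>\<in>space P0. \<exists>zc\<in>Q. Z0 \<omega> = fst zc \<and> (\<forall>j. j < m \<longrightarrow> R \<omega> T j = snd zc j)}"
    then obtain zc where sp: "\<omega> \<in> space P0" and zc: "zc \<in> Q" "Z0 \<omega> = fst zc" "\<forall>j. j < m \<longrightarrow> R \<omega> T j = snd zc j"
      by auto
    have "(\<Sum>j<m. \<nu> (n1+i) j * int (snd zc j)) = (\<Sum>j<m. \<nu> (n1+i) j * int (R \<omega> T j))" for i
      using zc(3) by (intro sum.cong) auto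
    then show "\<omega> \<in> Obs" using zc sp unfolding Q_def obs_event_def by auto
  qed
  also have "\<dots> \<in> SS Lab"
  proof (rule S.sets_Collect_countable_Ex'[OF _ cQ])
    fix zc assume "zc \<in> Q"
    have "{\<omega>\<in>space P0. \<forall>j. j < m \<longrightarrow> R \<omega> T j = snd zc j} \<in> SS Lab"
      using T_pos by (intro S.sets_Collect_countable_All S.sets_Collect_imp S.sets_Collect_const R_ev) auto
    then show "{\<omega>\<in>space P0. Z0 \<omega> = fst zc \<and> (\<forall>j. j < m \<longrightarrow> R \<omega> T j = snd zc j)} \<in> SS Lab"
      by (rule S.sets_Collect_conj[OF _ Z0_ev])
  qed
  finally show ?thesis .
qed

lemma Pn_SS: "{\<omega>\<in>space P0. Pn \<omega> j} \<in> SS (Filt j)"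
proof -
  interpret S: sigma_algebra "space P0" "SS (Filt j)" by (rule SS_sigma)
  have "{\<omega>\<in>space P0. Pn \<omega> j} = {\<omega>\<in>space P0. \<exists>zk\<in>vecs (n1+n2) \<times> vecs m1.
           Zf j \<omega> = fst zk \<and> Kp j \<omega> = snd zk \<and> snd zk \<in> Sset n1 m1 m2 \<nu> (obs_gap n1 y (fst zk))}"
  proof (intro Collect_cong conj_cong refl)
    fix \<omega> assume "\<omega> \<in> space P0"
    then have "(Zf j \<omega>, Kp j \<omega>) \<in> vecs (n1+n2) \<times> vecs m1" using Zf_vec Kp_vec by blast
    then show "Pn \<omega> j \<longleftrightarrow> (\<exists>zk\<in>vecs (n1+n2) \<times> vecs m1.
           Zf j \<omega> = fst zk \<and> Kp j \<omega> = snd zk \<and> snd zk \<in> Sset n1 m1 m2 \<nu> (obs_gap n1 y (fst zk)))"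
      by force
  qed
  also have "\<dots> \<in> SS (Filt j)"
  proof (rule S.sets_Collect_countable_Ex'[OF _ countable_vv])
    fix zk :: "(nat \<Rightarrow> nat) \<times> (nat \<Rightarrow> nat)"
    have "{\<omega>\<in>space P0. snd zk \<in> Sset n1 m1 m2 \<nu> (obs_gap n1 y (fst zk)) \<and> (Zf j \<omega> = fst zk \<and> Kp j \<omega> = snd zk)} \<in> SS (Filt j)"
      by (intro S.sets_Collect_conj F_ev S.sets_Collect_const)
    then show "{\<omega>\<in>space P0. Zf j \<omega> = fst zk \<and> Kp j \<omega> = snd zk \<and> snd zk \<in> Sset n1 m1 m2 \<nu> (obs_gap n1 y (fst zk))} \<in> SS (Filt j)"
      by (simp add: conj_commute conj_left_commute)
  qed
  finally show ?thesis .
qed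

lemma nPn_SS: "{\<omega>\<in>space P0. \<not> Pn \<omega> j} \<in> SS (Filt j)"
proof -
  interpret S: sigma_algebra "space P0" "SS (Filt j)" by (rule SS_sigma)
  show ?thesis by (rule S.sets_Collect_neg[OF Pn_SS])
qed

lemma Zint_SS: "{\<omega>\<in>space P0. p < \<zeta> i l \<omega> \<and> \<zeta> i l \<omega> \<le> q} \<in> SS (Unif i l)"
proof -
  interpret S: sigma_algebra "space P0" "SS (Unif i l)" by (rule SS_sigma)
  have "{\<omega>\<in>space P0. p < \<zeta> i l \<omega> \<and> \<zeta> i l \<omega> \<le> q} = {\<omega>\<in>space P0. \<zeta> i l \<omega> \<le> q} - {\<omega>\<in>space P0. \<zeta> i l \<omega> \<le> p}"
    by auto
  also have "\<dots> \<in> SS (Unif i l)" using U_ev by blast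
  finally show ?thesis .
qed

lemma Obs_P0: "Obs \<in> sets P0" using in_P0[OF Obs_SS] .

lemma Fn_P0: "Fn n \<in> sets P0"
proof -
  have a0: "{\<omega>\<in>space P0. j < n \<longrightarrow> \<not> Pn \<omega> j} \<in> sets P0" for j
    by (rule sets.sets_Collect_imp[OF in_P0[OF nPn_SS] sets.sets_Collect_const])
  have a: "{\<omega>\<in>space P0. \<forall>j. j < n \<longrightarrow> \<not> Pn \<omega> j} \<in> sets P0"
    by (rule sets.sets_Collect_countable_All[OF a0])
  have b: "{\<omega>\<in>space P0. Zf n \<omega> = z0 \<and> Kp n \<omega> = kp} \<in> sets P0" using in_P0[OF F_ev] .
  have e: "Fn n = ({\<omega>\<in>space P0. \<forall>j. j < n \<longrightarrow> \<not> Pn \<omega> j} \<inter> {\<omega>\<in>space P0. Zf n \<omega> = z0 \<and> Kp n \<omega> = kp}) \<inter> (Op \<inter> Obs)"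
    unfolding Fn_def by blast
  show ?thesis unfolding e using a b Op_ev Obs_P0 by (intro sets.Int)
qed

lemma FF_P0: "FF \<in> sets P0" unfolding FF_def using Fn_P0 by auto

lemma zin_P0: "{\<omega>\<in>space P0. 0 < \<zeta> i l \<omega> \<and> \<zeta> i l \<omega> \<le> 1} \<in> sets P0"
  using in_P0[OF Zint_SS[of 0 i l 1]] .

lemma Gall_P0: "Gall \<in> sets P0"
proof -
  have a: "{\<omega>\<in>space P0. \<forall>l. 0 < \<zeta> i l \<omega> \<and> \<zeta> i l \<omega> \<le> 1} \<in> sets P0" for i
    by (rule sets.sets_Collect_countable_All[OF zin_P0])
  have b: "{\<omega>\<in>space P0. i < m \<longrightarrow> (\<forall>l. 0 < \<zeta> i l \<omega> \<and> \<zeta> i l \<omega> \<le> 1)} \<in> sets P0" for i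
    by (rule sets.sets_Collect_imp[OF a sets.sets_Collect_const])
  show ?thesis unfolding Gall_def by (rule sets.sets_Collect_countable_All[OF b])
qed

lemma Gk_P0: "Gk \<in> sets P0"
proof -
  have a0: "{\<omega>\<in>space P0. l < k i \<longrightarrow> 0 < \<zeta> i l \<omega> \<and> \<zeta> i l \<omega> \<le> 1} \<in> sets P0" for i l
    by (rule sets.sets_Collect_imp[OF zin_P0 sets.sets_Collect_const])
  have a: "{\<omega>\<in>space P0. \<forall>l. l < k i \<longrightarrow> 0 < \<zeta> i l \<omega> \<and> \<zeta> i l \<omega> \<le> 1} \<in> sets P0" for i
    by (rule sets.sets_Collect_countable_All[OF a0])
  have b: "{\<omega>\<in>space P0. i < m \<longrightarrow> (\<forall>l. l < k i \<longrightarrow> 0 < \<zeta> i l \<omega> \<and> \<zeta> i l \<omega> \<le> 1)} \<in> sets P0" for i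
    by (rule sets.sets_Collect_imp[OF a sets.sets_Collect_const])
  show ?thesis unfolding Gk_def by (rule sets.sets_Collect_countable_All[OF b])
qed

lemma EI_P0: "EI \<in> sets P0"
proof (rule ccontr)
  assume "EI \<notin> sets P0"
  then have "measure P0 EI = 0" by (rule measure_notin_sets)
  then show False using condI_pos unfolding EI_def by simp
qed

lemma ER_P0: "ER \<in> sets P0"
proof (rule ccontr)
  assume "ER \<notin> sets P0"
  then have "measure P0 ER = 0" by (rule measure_notin_sets)
  then show False using condR_pos unfolding ER_def by simp
qed

end


definition cumv :: "nat \<Rightarrow> (nat \<Rightarrow> nat \<Rightarrow> nat) \<Rightarrow> nat \<Rightarrow> nat \<Rightarrow> nat" where
  "cumv m a j = (\<lambda>i. if i < m then (\<Sum>j'<j. a i j') else 0)"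
definition Abox :: "nat \<Rightarrow> (nat \<Rightarrow> nat) \<Rightarrow> nat \<Rightarrow> (nat \<Rightarrow> nat \<Rightarrow> nat) set" where
  "Abox m k r = {a. \<forall>i j. a i j \<le> k i \<and> ((m \<le> i \<or> r \<le> j) \<longrightarrow> a i j = 0)}"
definition vecR :: "nat \<Rightarrow> (nat \<Rightarrow> nat) \<Rightarrow> nat \<Rightarrow> real" where
  "vecR m c = (\<lambda>i\<in>{..<m}. real (c i))"
definition Adm :: "nat \<Rightarrow> (nat \<Rightarrow> nat) \<Rightarrow> nat \<Rightarrow> (nat \<Rightarrow> real) \<Rightarrow> real set \<Rightarrow> (real \<Rightarrow> (nat \<Rightarrow> real) set) \<Rightarrow> (nat \<Rightarrow> nat \<Rightarrow> nat) set" where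
  "Adm m k r ts J A = {a \<in> Abox m k r. (\<forall>i<m. (\<Sum>j<r. a i j) = k i) \<and>
      (\<forall>j\<le>r. ts j \<in> J \<longrightarrow> vecR m (cumv m a j) \<in> A (ts j))}"
definition IncE :: "nat \<Rightarrow> nat \<Rightarrow> (nat \<Rightarrow> real) \<Rightarrow> (real \<Rightarrow> nat \<Rightarrow> nat) \<Rightarrow> (nat \<Rightarrow> nat \<Rightarrow> nat) \<Rightarrow> bool" where
  "IncE m r ts X a \<longleftrightarrow> (\<forall>i<m. \<forall>j<r. X (ts (Suc j)) i = X (ts j) i + a i j)"

lemma cum_eq:
  assumes X0: "X (ts 0) = (\<lambda>_. 0)" and Xv: "\<forall>j\<le>r. X (ts j) \<in> vecs m" and inc: "IncE m r ts X a"
  shows "j \<le> r \<Longrightarrow> X (ts j) = cumv m a j"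
proof (induction j)
  case 0 then show ?case using X0 by (auto simp: cumv_def)
next
  case (Suc j)
  show ?case
  proof
    fix i show "X (ts (Suc j)) i = cumv m a (Suc j) i"
    proof (cases "i < m")
      case True
      then have "X (ts (Suc j)) i = X (ts j) i + a i j" using inc Suc.prems unfolding IncE_def by auto
      also have "\<dots> = cumv m a j i + a i j" using Suc by simp
      finally show ?thesis using True by (simp add: cumv_def)
    next
      case False
      then show ?thesis using Xv Suc.prems unfolding vecs_def cumv_def by auto
    qed
  qed
qed

lemma Abox_finite: "finite (Abox m k r)"
proof -
  define K where "K = (\<Sum>i<m. k i)"
  define B where "B = {f :: nat \<Rightarrow> nat. \<forall>j. (j \<in> {..<r} \<longrightarrow> f j \<in> {..K}) \<and> (j \<notin> {..<r} \<longrightarrow> f j = 0)}"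
  have fB: "finite B" unfolding B_def by (intro finite_set_of_finite_funs) auto
  have "Abox m k r \<subseteq> {a. \<forall>i. (i \<in> {..<m} \<longrightarrow> a i \<in> B) \<and> (i \<notin> {..<m} \<longrightarrow> a i = (\<lambda>_. 0))}"
  proof
    fix a assume a: "a \<in> Abox m k r"
    have "a i j \<le> K" if "i < m" for i j
    proof -
      have "a i j \<le> k i" using a unfolding Abox_def by auto
      also have "k i \<le> K" unfolding K_def using that by (intro member_le_sum) auto
      finally show ?thesis .
    qed
    then show "a \<in> {a. \<forall>i. (i \<in> {..<m} \<longrightarrow> a i \<in> B) \<and> (i \<notin> {..<m} \<longrightarrow> a i = (\<lambda>_. 0))}"
      using a unfolding Abox_def B_def by (auto simp: fun_eq_iff)
  qed
  moreover have "finite {a. \<forall>i. (i \<in> {..<m} \<longrightarrow> a i \<in> B) \<and> (i \<notin> {..<m} \<longrightarrow> a i = (\<lambda>_. 0))}"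
    by (intro finite_set_of_finite_funs fB) auto
  ultimately show ?thesis by (rule finite_subset)
qed

lemma Adm_finite: "finite (Adm m k r ts J A)"
  unfolding Adm_def by (rule finite_subset[OF _ Abox_finite[of m k r]]) auto

lemma Inc_unique:
  assumes "a \<in> Abox m k r" "a' \<in> Abox m k r" "IncE m r ts X a" "IncE m r ts X a'"
  shows "a = a'"
proof (intro ext)
  fix i j show "a i j = a' i j"
  proof (cases "i < m \<and> j < r")
    case True
    then show ?thesis using assms(3,4) unfolding IncE_def by force
  next
    case False
    then show ?thesis using assms(1,2) unfolding Abox_def by auto
  qed
qed

lemma decomp:
  assumes X0: "X (ts 0) = (\<lambda>_. 0)" and XT: "X (ts r) = k" and kv: "k \<in> vecs m"
    and Xv: "\<forall>j\<le>r. X (ts j) \<in> vecs m"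
    and mono: "\<forall>j<r. \<forall>i<m. X (ts j) i \<le> X (ts (Suc j)) i"
    and J: "J \<subseteq> ts ` {..r}"
  shows "(\<forall>t\<in>J. vecR m (X t) \<in> A t) \<longleftrightarrow> (\<exists>a\<in>Adm m k r ts J A. IncE m r ts X a)"
proof
  assume h: "\<forall>t\<in>J. vecR m (X t) \<in> A t"
  define a where "a = (\<lambda>i j. if i < m \<and> j < r then X (ts (Suc j)) i - X (ts j) i else 0)"
  have inc: "IncE m r ts X a" unfolding IncE_def a_def using mono by auto
  have cum: "\<And>j. j \<le> r \<Longrightarrow> X (ts j) = cumv m a j" by (rule cum_eq[OF X0 Xv inc])
  have sumk: "(\<Sum>j<r. a i j) = k i" if "i < m" for i
    using cum[of r] XT that unfolding cumv_def by (auto simp: fun_eq_iff)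
  have box: "a \<in> Abox m k r"
    unfolding Abox_def
  proof (intro CollectI allI conjI impI)
    fix i j
    show "a i j \<le> k i"
    proof (cases "i < m \<and> j < r")
      case True
      then have "a i j \<le> (\<Sum>j<r. a i j)" by (intro member_le_sum) auto
      then show ?thesis using sumk True by simp
    next
      case False then show ?thesis unfolding a_def by auto
    qed
    show "m \<le> i \<or> r \<le> j \<Longrightarrow> a i j = 0" unfolding a_def by auto
  qed
  have "a \<in> Adm m k r ts J A"
    unfolding Adm_def using box sumk h cum by auto
  then show "\<exists>a\<in>Adm m k r ts J A. IncE m r ts X a" using inc by blast
next
  assume "\<exists>a\<in>Adm m k r ts J A. IncE m r ts X a"
  then obtain a where a: "a \<in> Adm m k r ts J A" and inc: "IncE m r ts X a" by blast
  have cum: "\<And>j. j \<le> r \<Longrightarrow> X (ts j) = cumv m a j" by (rule cum_eq[OF X0 Xv inc])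
  show "\<forall>t\<in>J. vecR m (X t) \<in> A t"
  proof
    fix t assume t: "t \<in> J"
    then obtain j where j: "j \<le> r" "t = ts j" using J by auto
    then show "vecR m (X t) \<in> A t" using a cum[OF j(1)] t unfolding Adm_def by auto
  qed
qed

lemma grid:
  fixes T :: real and J :: "real set"
  assumes T: "T > 0" and fJ: "finite J" and J: "J \<subseteq> {0..T}"
  obtains r ts where "r \<ge> 1" "ts 0 = 0" "ts r = T" "\<And>j. j < r \<Longrightarrow> ts j < ts (Suc j)"
    "\<And>j. j \<le> r \<Longrightarrow> ts j \<in> {0..T}" "J \<subseteq> ts ` {..r}"
proof -
  define S where "S = J \<union> {0, T}"
  have fS: "finite S" using fJ unfolding S_def by simp
  obtain xs :: "real list" where xs: "sorted_wrt (<) xs" "set xs = S"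
    using ex1_sorted_list_for_set_if_finite[OF fS] by blast
  have SsubT: "S \<subseteq> {0..T}" using J T unfolding S_def by auto
  have 0: "0 \<in> set xs" and T': "T \<in> set xs" using xs(2) unfolding S_def by auto
  have ne: "xs \<noteq> []" using 0 by auto
  define r where "r = length xs - 1"
  define ts where "ts = (\<lambda>j. xs ! j)"
  have len: "length xs = Suc r" unfolding r_def using ne by (cases xs) auto
  have inr: "j \<le> r \<Longrightarrow> ts j \<in> S" for j unfolding ts_def using xs(2) len
    by (metis le_imp_less_Suc nth_mem)
  have rng: "j \<le> r \<Longrightarrow> ts j \<in> {0..T}" for j using inr[of j] SsubT by blast
  have lt: "j < j' \<Longrightarrow> j' \<le> r \<Longrightarrow> ts j < ts j'" for j j'
    unfolding ts_def using sorted_wrt_nth_less[OF xs(1)] len by simp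
  have t0: "ts 0 = 0"
  proof -
    obtain i where i: "i < length xs" "xs ! i = 0" using 0 by (auto simp: in_set_conv_nth)
    have "ts 0 \<le> ts i" using lt[of 0 i] i len by (cases "i = 0") auto
    then have "ts 0 \<le> 0" using i unfolding ts_def by simp
    moreover have "ts 0 \<ge> 0" using rng[of 0] by simp
    ultimately show ?thesis by simp
  qed
  have tT: "ts r = T"
  proof -
    obtain i where i: "i < length xs" "xs ! i = T" using T' by (auto simp: in_set_conv_nth)
    have "ts i \<le> ts r" using lt[of i r] i len by (cases "i = r") auto
    then have "T \<le> ts r" using i unfolding ts_def by simp
    moreover have "ts r \<le> T" using rng[of r] by simp
    ultimately show ?thesis by simp
  qed
  have r1: "r \<ge> 1"
  proof (rule ccontr)
    assume "\<not> r \<ge> 1" then have "r = 0" by simp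
    then show False using t0 tT T by simp
  qed
  have Jsub: "J \<subseteq> ts ` {..r}"
  proof
    fix t assume "t \<in> J"
    then have "t \<in> set xs" using xs(2) unfolding S_def by auto
    then obtain i where "i < length xs" "xs ! i = t" by (auto simp: in_set_conv_nth)
    then show "t \<in> ts ` {..r}" unfolding ts_def using len by force
  qed
  show ?thesis
    by (rule that[OF r1 t0 tT _ rng Jsub]) (use lt in auto)
qed

context P3 begin

lemma Gall_null: "emeasure P0 (Op - Gall) = 0"
proof -
  define N where "N = (\<lambda>il::nat\<times>nat. (Op \<inter> {\<omega>\<in>space P0. \<zeta> (fst il) (snd il) \<omega> \<le> 0})
       \<union> (Op \<inter> (space P0 - {\<omega>\<in>space P0. \<zeta> (fst il) (snd il) \<omega> \<le> 1})))"
  have Nn: "N il \<in> null_sets P0" for il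
  proof -
    obtain i l where il: "il = (i, l)" by (cases il)
    have s0: "{\<omega>\<in>space P0. \<zeta> i l \<omega> \<le> c} \<in> sets P0" for c using in_P0[OF U_ev] .
    interpret prob_space P0 by (rule P0)
    have m0: "measure P0 (Op \<inter> {\<omega>\<in>space P0. \<zeta> i l \<omega> \<le> 0}) = 0" using zeta_law by simp
    have m1: "measure P0 (Op \<inter> {\<omega>\<in>space P0. \<zeta> i l \<omega> \<le> 1}) = measure P0 Op" using zeta_law by simp
    have "Op \<inter> (space P0 - {\<omega>\<in>space P0. \<zeta> i l \<omega> \<le> 1}) = Op - (Op \<inter> {\<omega>\<in>space P0. \<zeta> i l \<omega> \<le> 1})"
      using sets.sets_into_space[OF Op_ev] by blast
    then have m2: "measure P0 (Op \<inter> (space P0 - {\<omega>\<in>space P0. \<zeta> i l \<omega> \<le> 1})) = 0"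
      using m1 s0 Op_ev by (simp add: finite_measure_Diff)
    have a: "Op \<inter> {\<omega>\<in>space P0. \<zeta> i l \<omega> \<le> 0} \<in> null_sets P0"
      using m0 s0 Op_ev by (auto simp: null_sets_def emeasure_eq_measure)
    have b: "Op \<inter> (space P0 - {\<omega>\<in>space P0. \<zeta> i l \<omega> \<le> 1}) \<in> null_sets P0"
      using m2 s0 Op_ev by (auto simp: null_sets_def emeasure_eq_measure)
    show ?thesis unfolding N_def il fst_conv snd_conv using a b by (rule null_sets.Un)
  qed
  have U: "(\<Union>il\<in>UNIV. N il) \<in> null_sets P0"
    by (rule null_sets_UN') (auto intro: Nn)
  have sub: "Op - Gall \<subseteq> (\<Union>il\<in>UNIV. N il)"
  proof
    fix \<omega> assume w: "\<omega> \<in> Op - Gall"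
    then have sp: "\<omega> \<in> space P0" using sets.sets_into_space[OF Op_ev] by blast
    from w obtain i l where "\<not> (0 < \<zeta> i l \<omega> \<and> \<zeta> i l \<omega> \<le> 1)" unfolding Gall_def using sp by auto
    then have "\<omega> \<in> N (i, l)" unfolding N_def using w sp by auto
    then show "\<omega> \<in> (\<Union>il\<in>UNIV. N il)" by blast
  qed
  have "Op - Gall \<in> null_sets P0"
    by (rule null_sets_subset[OF U _ sub]) (use Op_ev Gall_P0 in auto)
  then show ?thesis by (rule null_setsD1)
qed

definition "BI = FF \<inter> Gk"

lemma BI_P0: "BI \<in> sets P0" unfolding BI_def using FF_P0 Gk_P0 by auto

lemma EI_BI: "uniform_measure P0 EI = uniform_measure P0 BI"
proof (rule uniform_measure_null_cong[OF EI_P0 BI_P0])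
  have "EI - BI \<subseteq> Op - Gall"
  proof
    fix \<omega> assume w: "\<omega> \<in> EI - BI"
    have "\<omega> \<notin> Gall"
    proof
      assume "\<omega> \<in> Gall"
      then have "\<omega> \<in> FF" "\<omega> \<in> Gk" using EI_Gall_sub w unfolding Gall_def Gk_def by auto
      then show False using w unfolding BI_def by auto
    qed
    moreover have "\<omega> \<in> Op" using w unfolding EI_def by auto
    ultimately show "\<omega> \<in> Op - Gall" by simp
  qed
  then show "emeasure P0 (EI - BI) = 0"
    using Gall_null emeasure_mono[of "EI - BI" "Op - Gall" P0] Op_ev Gall_P0 by auto
  have e: "BI - EI = {}" using FF_Gk_sub unfolding BI_def by auto
  show "emeasure P0 (BI - EI) = 0" unfolding e by simp
qed

lemma FF_Op: "FF \<subseteq> Op" unfolding FF_def Fn_def by auto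

lemma BI_FF: "measure P0 BI = measure P0 FF"
proof -
  interpret prob_space P0 by (rule P0)
  have "FF - BI \<subseteq> Op - Gall" using FF_Op unfolding BI_def Gall_def Gk_def by auto
  then have "emeasure P0 (FF - BI) = 0"
    using Gall_null emeasure_mono[of "FF - BI" "Op - Gall" P0] Op_ev Gall_P0 by auto
  then have "measure P0 (FF - BI) = 0" by (simp add: measure_def)
  moreover have "measure P0 (FF - BI) = measure P0 FF - measure P0 BI"
    using BI_P0 FF_P0 by (intro finite_measure_Diff) (auto simp: BI_def)
  ultimately show ?thesis by simp
qed

definition "Oz = Op \<inter> {\<omega>\<in>space P0. Z0 \<omega> = z0}"
definition "PK = (\<Prod>i<m. poisson_prob (Lam i 0 T) (k i))"
definition "PR r ts a = (\<Prod>i<m. \<Prod>j<r. poisson_prob (Lam i (ts j) (ts (Suc j))) (a i j))"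

lemma Oz_P0: "Oz \<in> sets P0" unfolding Oz_def using Op_ev in_P0[OF Z0_ev] by auto

lemma CP: "cond_poisson_process P0 Oz R m T (\<lambda>i t. lam t z0 y i)"
  using R_law z0_vec unfolding Oz_def by blast

lemma R_pair_ev:
  assumes "s \<in> {0..T}" "t \<in> {0..T}"
  shows "{\<omega>\<in>space P0. R \<omega> t i = R \<omega> s i + d} \<in> sets P0"
proof -
  have "{\<omega>\<in>space P0. R \<omega> t i = R \<omega> s i + d} = {\<omega>\<in>space P0. \<exists>c. R \<omega> s i = c \<and> R \<omega> t i = c + d}" by auto
  also have "\<dots> \<in> sets P0"
  proof (rule sets.sets_Collect_countable_Ex)
    fix c
    have "{\<omega>\<in>space P0. R \<omega> t i = c + d} \<in> sets P0" using in_P0[OF R_ev[OF assms(2)]] .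
    moreover have "{\<omega>\<in>space P0. R \<omega> s i = c} \<in> sets P0" using in_P0[OF R_ev[OF assms(1)]] .
    ultimately show "{\<omega>\<in>space P0. R \<omega> s i = c \<and> R \<omega> t i = c + d} \<in> sets P0"
      by (rule sets.sets_Collect_conj)
  qed
  finally show ?thesis .
qed

lemma IncR_ev:
  assumes "\<And>j. j \<le> r \<Longrightarrow> ts j \<in> {0..T}"
  shows "{\<omega>\<in>space P0. IncE m r ts (R \<omega>) a} \<in> sets P0"
proof -
  have a: "{\<omega>\<in>space P0. j < r \<longrightarrow> R \<omega> (ts (Suc j)) i = R \<omega> (ts j) i + a i j} \<in> sets P0" for i j
  proof (cases "j < r")
    case True
    then have "{\<omega>\<in>space P0. R \<omega> (ts (Suc j)) i = R \<omega> (ts j) i + a i j} \<in> sets P0"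
      using assms by (intro R_pair_ev) auto
    then show ?thesis using True by simp
  next
    case False then show ?thesis by simp
  qed
  have b: "{\<omega>\<in>space P0. \<forall>j. j < r \<longrightarrow> R \<omega> (ts (Suc j)) i = R \<omega> (ts j) i + a i j} \<in> sets P0" for i
    by (rule sets.sets_Collect_countable_All[OF a])
  have c: "{\<omega>\<in>space P0. i < m \<longrightarrow> (\<forall>j. j < r \<longrightarrow> R \<omega> (ts (Suc j)) i = R \<omega> (ts j) i + a i j)} \<in> sets P0" for i
    by (rule sets.sets_Collect_imp[OF b sets.sets_Collect_const])
  show ?thesis unfolding IncE_def by (rule sets.sets_Collect_countable_All[OF c])
qed

lemma ER_eq: "ER = Oz \<inter> {\<omega>\<in>space P0. \<forall>i<m. \<forall>j<Suc 0. R \<omega> ((\<lambda>j. if j = 0 then 0 else T) (Suc j)) i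
                   = R \<omega> ((\<lambda>j. if j = 0 then 0 else T) j) i + k i}"
proof (intro set_eqI iffI)
  fix \<omega> assume "\<omega> \<in> ER"
  then show "\<omega> \<in> Oz \<inter> {\<omega>\<in>space P0. \<forall>i<m. \<forall>j<Suc 0. R \<omega> ((\<lambda>j. if j = 0 then 0 else T) (Suc j)) i
                   = R \<omega> ((\<lambda>j. if j = 0 then 0 else T) j) i + k i}"
    unfolding ER_def Oz_def using R_zero by auto
next
  fix \<omega> assume w: "\<omega> \<in> Oz \<inter> {\<omega>\<in>space P0. \<forall>i<m. \<forall>j<Suc 0. R \<omega> ((\<lambda>j. if j = 0 then 0 else T) (Suc j)) i
                   = R \<omega> ((\<lambda>j. if j = 0 then 0 else T) j) i + k i}"
  then have sp: "\<omega> \<in> space P0" and z: "Z0 \<omega> = z0" and o: "\<omega> \<in> Op" unfolding Oz_def by auto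
  have "R \<omega> T i = k i" for i
  proof (cases "i < m")
    case True then show ?thesis using w R_zero[OF sp] by auto
  next
    case False then show ?thesis using R_vec[OF sp, of T] k_vec T_pos unfolding vecs_def by auto
  qed
  then have RT: "R \<omega> T = k" by auto
  show "\<omega> \<in> ER" unfolding ER_def using sp z o RT obs_of[OF sp z RT] by auto
qed

lemma ER_meas: "measure P0 ER = measure P0 Oz * PK"
proof -
  have "measure P0 (Oz \<inter> {\<omega>\<in>space P0. \<forall>i<m. \<forall>j<Suc 0. R \<omega> ((\<lambda>j. if j = 0 then 0 else T) (Suc j)) i
                   = R \<omega> ((\<lambda>j. if j = 0 then 0 else T) j) i + (\<lambda>i j. k i) i j})
     = measure P0 Oz * (\<Prod>i<m. \<Prod>j<Suc 0. poisson_prob (LINT u:{(\<lambda>j. if j = 0 then 0 else T) j..(\<lambda>j. if j = 0 then 0 else T) (Suc j)}|lborel. lam u z0 y i) ((\<lambda>i j. k i) i j))"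
  proof (rule CP[unfolded cond_poisson_process_def, rule_format])
    show "(\<lambda>j. if j = 0 then 0 else T) 0 = (0::real)" by simp
    show "(\<lambda>j. if j = 0 then 0 else T) (Suc 0) \<le> T" by simp
    fix j assume "j < Suc 0"
    then show "(\<lambda>j. if j = 0 then 0 else T) j \<le> (\<lambda>j. if j = 0 then 0 else T) (Suc j)" using T_pos by simp
  qed
  then show ?thesis unfolding ER_eq[symmetric] PK_def Lam_def by simp
qed

lemma ER_Inc:
  assumes ts0: "ts 0 = 0" and tsr: "\<And>j. j \<le> r \<Longrightarrow> ts j \<in> {0..T}" and tsT: "ts r = T"
    and a: "\<forall>i<m. (\<Sum>j<r. a i j) = k i"
  shows "ER \<inter> {\<omega>\<in>space P0. IncE m r ts (R \<omega>) a} = Oz \<inter> {\<omega>\<in>space P0. \<forall>i<m. \<forall>j<r. R \<omega> (ts (Suc j)) i = R \<omega> (ts j) i + a i j}"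
proof (intro set_eqI iffI)
  fix \<omega> assume "\<omega> \<in> ER \<inter> {\<omega>\<in>space P0. IncE m r ts (R \<omega>) a}"
  then show "\<omega> \<in> Oz \<inter> {\<omega>\<in>space P0. \<forall>i<m. \<forall>j<r. R \<omega> (ts (Suc j)) i = R \<omega> (ts j) i + a i j}"
    unfolding ER_def Oz_def IncE_def by auto
next
  fix \<omega> assume w: "\<omega> \<in> Oz \<inter> {\<omega>\<in>space P0. \<forall>i<m. \<forall>j<r. R \<omega> (ts (Suc j)) i = R \<omega> (ts j) i + a i j}"
  then have sp: "\<omega> \<in> space P0" and z: "Z0 \<omega> = z0" and o: "\<omega> \<in> Op" unfolding Oz_def by auto
  have inc: "IncE m r ts (R \<omega>) a" using w unfolding IncE_def by auto
  have X0: "R \<omega> (ts 0) = (\<lambda>_. 0)" using R_zero[OF sp] ts0 by simp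
  have Xv: "\<forall>j\<le>r. R \<omega> (ts j) \<in> vecs m" using R_vec[OF sp] tsr by auto
  have "R \<omega> (ts r) = cumv m a r" by (rule cum_eq[OF X0 Xv inc]) simp
  also have "\<dots> = k" using a k_vec unfolding cumv_def vecs_def by (auto simp: fun_eq_iff)
  finally have RT: "R \<omega> T = k" using tsT by simp
  show "\<omega> \<in> ER \<inter> {\<omega>\<in>space P0. IncE m r ts (R \<omega>) a}"
    unfolding ER_def using sp z o RT obs_of[OF sp z RT] inc by auto
qed

lemma ER_Inc_meas:
  assumes ts0: "ts 0 = 0" and tsr: "\<And>j. j \<le> r \<Longrightarrow> ts j \<in> {0..T}" and tsT: "ts r = T"
    and mono: "\<And>j. j < r \<Longrightarrow> ts j < ts (Suc j)"
    and a: "\<forall>i<m. (\<Sum>j<r. a i j) = k i"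
  shows "measure P0 (ER \<inter> {\<omega>\<in>space P0. IncE m r ts (R \<omega>) a}) = measure P0 Oz * PR r ts a"
proof -
  have "measure P0 (Oz \<inter> {\<omega>\<in>space P0. \<forall>i<m. \<forall>j<r. R \<omega> (ts (Suc j)) i = R \<omega> (ts j) i + a i j})
     = measure P0 Oz * (\<Prod>i<m. \<Prod>j<r. poisson_prob (LINT u:{ts j..ts (Suc j)}|lborel. lam u z0 y i) (a i j))"
  proof (rule CP[unfolded cond_poisson_process_def, rule_format])
    show "ts 0 = 0" by (rule ts0)
    show "ts r \<le> T" using tsr[of r] by simp
    fix j assume "j < r"
    then show "ts j \<le> ts (Suc j)" using mono[of j] by simp
  qed
  moreover have "ER \<inter> {\<omega>\<in>space P0. IncE m r ts (R \<omega>) a} = Oz \<inter> {\<omega>\<in>space P0. \<forall>i<m. \<forall>j<r. R \<omega> (ts (Suc j)) i = R \<omega> (ts j) i + a i j}"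
    by (rule ER_Inc[OF ts0 tsr tsT a])
  ultimately show ?thesis unfolding PR_def Lam_def by simp
qed

lemma R_cyl:
  assumes ts0: "ts 0 = 0" and tsr: "\<And>j. j \<le> r \<Longrightarrow> ts j \<in> {0..T}" and tsT: "ts r = T"
    and mono: "\<And>j. j < r \<Longrightarrow> ts j < ts (Suc j)" and J: "J \<subseteq> ts ` {..r}"
  shows "measure P0 (ER \<inter> {\<omega>\<in>space P0. \<forall>t\<in>J. vecR m (R \<omega> t) \<in> A t})
         = (\<Sum>a\<in>Adm m k r ts J A. measure P0 Oz * PR r ts a)"
proof -
  interpret prob_space P0 by (rule P0)
  have e: "ER \<inter> {\<omega>\<in>space P0. \<forall>t\<in>J. vecR m (R \<omega> t) \<in> A t}
        = (\<Union>a\<in>Adm m k r ts J A. ER \<inter> {\<omega>\<in>space P0. IncE m r ts (R \<omega>) a})"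
  proof (intro set_eqI)
    fix \<omega>
    show "\<omega> \<in> ER \<inter> {\<omega>\<in>space P0. \<forall>t\<in>J. vecR m (R \<omega> t) \<in> A t} \<longleftrightarrow>
          \<omega> \<in> (\<Union>a\<in>Adm m k r ts J A. ER \<inter> {\<omega>\<in>space P0. IncE m r ts (R \<omega>) a})"
    proof (cases "\<omega> \<in> ER")
      case True
      then have sp: "\<omega> \<in> space P0" and RT: "R \<omega> T = k" unfolding ER_def by auto
      have X0: "R \<omega> (ts 0) = (\<lambda>_. 0)" using R_zero[OF sp] ts0 by simp
      have XT: "R \<omega> (ts r) = k" using RT tsT by simp
      have Xv: "\<forall>j\<le>r. R \<omega> (ts j) \<in> vecs m" using R_vec[OF sp] tsr by auto
      have Xm: "\<forall>j<r. \<forall>i<m. R \<omega> (ts j) i \<le> R \<omega> (ts (Suc j)) i"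
      proof (intro allI impI)
        fix j i assume j: "j < r" and i: "i < m"
        show "R \<omega> (ts j) i \<le> R \<omega> (ts (Suc j)) i"
          using R_mono[OF sp i tsr[of j] tsr[of "Suc j"]] mono[OF j] j by simp
      qed
      have d: "(\<forall>t\<in>J. vecR m (R \<omega> t) \<in> A t) \<longleftrightarrow> (\<exists>a\<in>Adm m k r ts J A. IncE m r ts (R \<omega>) a)"
        by (rule decomp[OF X0 XT k_vec Xv Xm J])
      show ?thesis using d True sp by auto
    next
      case False then show ?thesis by auto
    qed
  qed
  have "measure P0 (\<Union>a\<in>Adm m k r ts J A. ER \<inter> {\<omega>\<in>space P0. IncE m r ts (R \<omega>) a})
        = (\<Sum>a\<in>Adm m k r ts J A. measure P0 (ER \<inter> {\<omega>\<in>space P0. IncE m r ts (R \<omega>) a}))"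
  proof (rule finite_measure_finite_Union)
    show "finite (Adm m k r ts J A)" by (rule Adm_finite)
    show "(\<lambda>a. ER \<inter> {\<omega>\<in>space P0. IncE m r ts (R \<omega>) a}) ` Adm m k r ts J A \<subseteq> sets P0"
      using ER_P0 IncR_ev[OF tsr] by auto
    show "disjoint_family_on (\<lambda>a. ER \<inter> {\<omega>\<in>space P0. IncE m r ts (R \<omega>) a}) (Adm m k r ts J A)"
      unfolding disjoint_family_on_def
    proof (intro ballI impI)
      fix a b assume ab: "a \<in> Adm m k r ts J A" "b \<in> Adm m k r ts J A" "a \<noteq> b"
      then have "a \<in> Abox m k r" "b \<in> Abox m k r" unfolding Adm_def by auto
      then show "ER \<inter> {\<omega>\<in>space P0. IncE m r ts (R \<omega>) a} \<inter> (ER \<inter> {\<omega>\<in>space P0. IncE m r ts (R \<omega>) b}) = {}"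
        using Inc_unique ab(3) by blast
    qed
  qed
  also have "\<dots> = (\<Sum>a\<in>Adm m k r ts J A. measure P0 Oz * PR r ts a)"
  proof (intro sum.cong refl)
    fix a assume "a \<in> Adm m k r ts J A"
    then have "\<forall>i<m. (\<Sum>j<r. a i j) = k i" unfolding Adm_def by auto
    then show "measure P0 (ER \<inter> {\<omega>\<in>space P0. IncE m r ts (R \<omega>) a}) = measure P0 Oz * PR r ts a"
      using ER_Inc_meas[OF ts0 tsr tsT mono, of a] by simp
  qed
  finally show ?thesis unfolding e .
qed

end


context P3 begin

lemma indep_prod:
  assumes Lo: "Lo \<in> SS Lab" and Ph: "\<And>j. j \<le> n \<Longrightarrow> Ph j \<in> SS (Filt j)"
    and fS: "finite Sig" and V: "\<And>i l. (i, l) \<in> Sig \<Longrightarrow> V i l \<in> SS (Unif i l)"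
  shows "measure M (Lo \<inter> (\<Inter>j\<in>{..n}. Ph j) \<inter> (\<Inter>il\<in>Sig. V (fst il) (snd il)))
       = measure M (Lo \<inter> (\<Inter>j\<in>{..n}. Ph j)) * (\<Prod>il\<in>Sig. measure M (V (fst il) (snd il)))"
proof -
  interpret Mp: prob_space M by (rule M_prob)
  define A where "A s = (case s of Lab \<Rightarrow> Lo | Filt j \<Rightarrow> Ph j | Unif i l \<Rightarrow> V i l)" for s
  define Ix0 where "Ix0 = insert Lab (Filt ` {..n})"
  define IxU where "IxU = (\<lambda>il. Unif (fst il) (snd il)) ` Sig"
  have dis: "Ix0 \<inter> IxU = {}" unfolding Ix0_def IxU_def by auto
  have f0: "finite Ix0" unfolding Ix0_def by simp
  have fU: "finite IxU" unfolding IxU_def using fS by simp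
  have AF: "\<forall>s\<in>Ix0 \<union> IxU. A s \<in> SS s"
    unfolding Ix0_def IxU_def A_def using Lo Ph V by auto
  have p1: "Mp.prob (\<Inter>s\<in>Ix0 \<union> IxU. A s) = (\<Prod>s\<in>Ix0 \<union> IxU. Mp.prob (A s))"
    by (rule Mp.indep_setsD[OF indep]) (use f0 fU AF in \<open>auto simp: Ix0_def\<close>)
  have p0: "Mp.prob (\<Inter>s\<in>Ix0. A s) = (\<Prod>s\<in>Ix0. Mp.prob (A s))"
    by (rule Mp.indep_setsD[OF indep]) (use f0 AF in \<open>auto simp: Ix0_def\<close>)
  have injU: "inj_on (\<lambda>il. Unif (fst il) (snd il)) Sig" by (auto simp: inj_on_def prod_eq_iff)
  have pU: "(\<Prod>s\<in>IxU. Mp.prob (A s)) = (\<Prod>il\<in>Sig. Mp.prob (V (fst il) (snd il)))"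
    unfolding IxU_def by (subst prod.reindex[OF injU]) (simp add: A_def)
  have e0: "(\<Inter>s\<in>Ix0. A s) = Lo \<inter> (\<Inter>j\<in>{..n}. Ph j)" unfolding Ix0_def A_def by auto
  have eU: "(\<Inter>s\<in>IxU. A s) = (\<Inter>il\<in>Sig. V (fst il) (snd il))" unfolding IxU_def A_def by auto
  have "(\<Inter>s\<in>Ix0 \<union> IxU. A s) = (\<Inter>s\<in>Ix0. A s) \<inter> (\<Inter>s\<in>IxU. A s)" by auto
  then have e: "(\<Inter>s\<in>Ix0 \<union> IxU. A s) = Lo \<inter> (\<Inter>j\<in>{..n}. Ph j) \<inter> (\<Inter>il\<in>Sig. V (fst il) (snd il))"
    using e0 eU by simp
  have "(\<Prod>s\<in>Ix0 \<union> IxU. Mp.prob (A s)) = (\<Prod>s\<in>Ix0. Mp.prob (A s)) * (\<Prod>s\<in>IxU. Mp.prob (A s))"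
    by (rule prod.union_disjoint[OF f0 fU dis])
  then show ?thesis using p1 p0 e e0 pU by simp
qed

lemma measM: "X \<in> sets P0 \<Longrightarrow> measure M X = measure P0 (Op \<inter> X) / measure P0 Op"
proof -
  interpret prob_space P0 by (rule P0)
  assume X: "X \<in> sets P0"
  show ?thesis
    using Op_pos X by (intro measure_uniform_measure) (auto simp: emeasure_eq_measure)
qed

lemma measM_U:
  assumes "0 \<le> a" "a \<le> b" "b \<le> 1"
  shows "measure M {\<omega>\<in>space P0. a < \<zeta> i l \<omega> \<and> \<zeta> i l \<omega> \<le> b} = b - a"
proof -
  interpret prob_space P0 by (rule P0)
  have s: "{\<omega>\<in>space P0. \<zeta> i l \<omega> \<le> c} \<in> sets P0" for c using in_P0[OF U_ev] .
  have e: "Op \<inter> {\<omega>\<in>space P0. a < \<zeta> i l \<omega> \<and> \<zeta> i l \<omega> \<le> b}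
        = (Op \<inter> {\<omega>\<in>space P0. \<zeta> i l \<omega> \<le> b}) - (Op \<inter> {\<omega>\<in>space P0. \<zeta> i l \<omega> \<le> a})" by auto
  have sub: "Op \<inter> {\<omega>\<in>space P0. \<zeta> i l \<omega> \<le> a} \<subseteq> Op \<inter> {\<omega>\<in>space P0. \<zeta> i l \<omega> \<le> b}"
    using assms by auto
  have "measure P0 (Op \<inter> {\<omega>\<in>space P0. a < \<zeta> i l \<omega> \<and> \<zeta> i l \<omega> \<le> b})
       = measure P0 (Op \<inter> {\<omega>\<in>space P0. \<zeta> i l \<omega> \<le> b}) - measure P0 (Op \<inter> {\<omega>\<in>space P0. \<zeta> i l \<omega> \<le> a})"
    unfolding e using s Op_ev sub by (intro finite_measure_Diff) auto
  also have "\<dots> = measure P0 Op * b - measure P0 Op * a" using zeta_law assms by simp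
  finally have h1: "measure P0 (Op \<inter> {\<omega>\<in>space P0. a < \<zeta> i l \<omega> \<and> \<zeta> i l \<omega> \<le> b}) = measure P0 Op * (b - a)"
    by (simp add: right_diff_distrib)
  show ?thesis
    unfolding measM[OF in_P0[OF Zint_SS[of a i l b]]] h1 using Op_pos by simp
qed

end

definition cm :: "nat \<Rightarrow> (nat \<Rightarrow> nat) \<Rightarrow> nat multiset" where
  "cm r f = (\<Sum>j<r. replicate_mset (f j) j)"

lemma count_cm: "count (cm r f) x = (if x < r then f x else 0)"
  unfolding cm_def by (induction r) (auto simp: count_sum)

lemma set_cm: "set_mset (cm r f) \<subseteq> {..<r}"
proof
  fix x assume "x \<in># cm r f"
  then have "count (cm r f) x \<noteq> 0" by simp
  then show "x \<in> {..<r}" unfolding count_cm by (simp split: if_splits)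
qed

lemma size_cm: "size (cm r f) = (\<Sum>j<r. f j)"
  unfolding cm_def by (induction r) auto

locale P3g = P3 +
  fixes r :: nat and ts :: "nat \<Rightarrow> real"
  assumes r1: "r \<ge> 1" and ts0: "ts 0 = 0" and tsT: "ts r = T"
    and tsmono: "\<And>j. j < r \<Longrightarrow> ts j < ts (Suc j)"
    and tsr: "\<And>j. j \<le> r \<Longrightarrow> ts j \<in> {0..T}"
begin

lemma ts_le: "j \<le> j' \<Longrightarrow> j' \<le> r \<Longrightarrow> ts j \<le> ts j'"
proof (induction j' rule: dec_induct)
  case base then show ?case by simp
next
  case (step n)
  then show ?case using tsmono[of n] by simp
qed

definition p :: "nat \<Rightarrow> nat \<Rightarrow> real" where "p i j = et i (ts j) / et i T"

lemma p0: "i < m \<Longrightarrow> p i 0 = 0" unfolding p_def using ts0 et_zero by simp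
lemma pr: "i < m \<Longrightarrow> p i r = 1" unfolding p_def using tsT et_T_pos[of i] by simp

lemma p_mono: "i < m \<Longrightarrow> j \<le> j' \<Longrightarrow> j' \<le> r \<Longrightarrow> p i j \<le> p i j'"
proof -
  assume a: "i < m" "j \<le> j'" "j' \<le> r"
  have "et i (ts j) \<le> et i (ts j')"
    using et_le_iff[OF a(1) tsr[of j] tsr[of j']] ts_le[OF a(2,3)] a by simp
  then show ?thesis unfolding p_def using et_T_pos[OF a(1)] by (simp add: divide_right_mono)
qed

lemma p_range: "i < m \<Longrightarrow> j \<le> r \<Longrightarrow> 0 \<le> p i j \<and> p i j \<le> 1"
  using p_mono[of i 0 j] p_mono[of i j r] p0 pr by simp

lemma Lam_ts: "i < m \<Longrightarrow> j < r \<Longrightarrow> Lam i (ts j) (ts (Suc j)) = et i (ts (Suc j)) - et i (ts j)"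
  using et_add[of i "ts j" "ts (Suc j)"] tsr[of j] tsr[of "Suc j"] tsmono[of j] by simp

lemma w_eq: "i < m \<Longrightarrow> j < r \<Longrightarrow> p i (Suc j) - p i j = Lam i (ts j) (ts (Suc j)) / et i T"
  unfolding p_def using Lam_ts by (simp add: diff_divide_distrib)

lemma Lam_sum: "i < m \<Longrightarrow> (\<Sum>j<r. Lam i (ts j) (ts (Suc j))) = et i T"
proof -
  assume i: "i < m"
  have "(\<Sum>j<r. Lam i (ts j) (ts (Suc j))) = (\<Sum>j<r. et i (ts (Suc j)) - et i (ts j))"
    using Lam_ts[OF i] by simp
  also have "\<dots> = et i (ts r) - et i (ts 0)" by (rule sum_lessThan_telescope)
  finally show ?thesis using ts0 tsT et_zero[OF i] by simp
qed

definition bin :: "nat \<Rightarrow> real \<Rightarrow> nat" where "bin i x = (LEAST j. x \<le> p i (Suc j))"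

lemma bin_props:
  assumes i: "i < m" and x: "0 < x" "x \<le> 1"
  shows "bin i x < r" "p i (bin i x) < x" "x \<le> p i (Suc (bin i x))"
proof -
  have ex: "x \<le> p i (Suc (r - 1))" using pr[OF i] x r1 by simp
  show b: "x \<le> p i (Suc (bin i x))" unfolding bin_def by (rule LeastI[where P="\<lambda>j. x \<le> p i (Suc j)", OF ex])
  have "bin i x \<le> r - 1" unfolding bin_def by (rule Least_le[where P="\<lambda>j. x \<le> p i (Suc j)", OF ex])
  then show "bin i x < r" using r1 by simp
  show "p i (bin i x) < x"
  proof (cases "bin i x")
    case 0 then show ?thesis using p0[OF i] x by simp
  next
    case (Suc b)
    then have "b < bin i x" by simp
    then have "\<not> x \<le> p i (Suc b)" unfolding bin_def by (rule not_less_Least)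
    then show ?thesis using Suc by simp
  qed
qed

lemma bin_unique:
  assumes i: "i < m" and j: "j < r" and x: "p i j < x" "x \<le> p i (Suc j)"
  shows "bin i x = j"
proof -
  have x01: "0 < x" "x \<le> 1" using x p_range[OF i, of j] p_range[OF i, of "Suc j"] j by auto
  note b = bin_props[OF i x01]
  show ?thesis
  proof (rule ccontr)
    assume ne: "bin i x \<noteq> j"
    show False
    proof (cases "bin i x < j")
      case True
      then have "p i (Suc (bin i x)) \<le> p i j" using p_mono[OF i, of "Suc (bin i x)" j] j by simp
      then show False using b x by simp
    next
      case False
      then have "Suc j \<le> bin i x" using ne by simp
      then have "p i (Suc j) \<le> p i (bin i x)" using p_mono[OF i, of "Suc j" "bin i x"] b by simp
      then show False using b x by simp
    qed
  qed
qed

lemma le_p_iff: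
  assumes i: "i < m" and x: "0 < x" "x \<le> 1" and j: "j \<le> r"
  shows "x \<le> p i j \<longleftrightarrow> bin i x < j"
proof
  note b = bin_props[OF i x]
  assume h: "x \<le> p i j"
  show "bin i x < j"
  proof (rule ccontr)
    assume "\<not> bin i x < j"
    then have "p i j \<le> p i (bin i x)" using p_mono[OF i, of j "bin i x"] b by simp
    then show False using h b by simp
  qed
next
  note b = bin_props[OF i x]
  assume "bin i x < j"
  then have "p i (Suc (bin i x)) \<le> p i j" using p_mono[OF i, of "Suc (bin i x)" j] j by simp
  then show "x \<le> p i j" using b by simp
qed

end

lemma count_map_upt: "count (mset (map f [0..<n])) j = card {l. l < n \<and> f l = j}"
proof (induction n)
  case 0 then show ?case by simp
next
  case (Suc n)
  have e: "{l. l < Suc n \<and> f l = j} = {l. l < n \<and> f l = j} \<union> (if f n = j then {n} else {})"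
    by (auto simp: less_Suc_eq)
  have "card {l. l < Suc n \<and> f l = j} = card {l. l < n \<and> f l = j} + (if f n = j then 1 else 0)"
    unfolding e by (auto simp: card_Un_disjoint)
  then show ?case using Suc by simp
qed

context P3g begin

definition bl :: "nat \<Rightarrow> 'a \<Rightarrow> nat list" where "bl i \<omega> = map (\<lambda>l. bin i (\<zeta> i l \<omega>)) [0..<k i]"

lemma Gk_D: "\<omega> \<in> Gk \<Longrightarrow> i < m \<Longrightarrow> l < k i \<Longrightarrow> 0 < \<zeta> i l \<omega> \<and> \<zeta> i l \<omega> \<le> 1"
  unfolding Gk_def by auto

lemma Jp_ts: "\<omega> \<in> Gk \<Longrightarrow> i < m \<Longrightarrow> j \<le> r \<Longrightarrow> Jp \<omega> (ts j) i = card {l. l < k i \<and> bin i (\<zeta> i l \<omega>) < j}"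
proof -
  assume w: "\<omega> \<in> Gk" and i: "i < m" and j: "j \<le> r"
  have "{l. l < k i \<and> \<zeta> i l \<omega> \<le> et i (ts j) / et i T} = {l. l < k i \<and> bin i (\<zeta> i l \<omega>) < j}"
  proof (intro Collect_cong conj_cong refl)
    fix l assume l: "l < k i"
    have x: "0 < \<zeta> i l \<omega>" "\<zeta> i l \<omega> \<le> 1" using Gk_D[OF w i l] by auto
    show "\<zeta> i l \<omega> \<le> et i (ts j) / et i T \<longleftrightarrow> bin i (\<zeta> i l \<omega>) < j"
      using le_p_iff[OF i x j] unfolding p_def .
  qed
  then show ?thesis unfolding Jp_def using i by simp
qed

lemma Jp_inc: "\<omega> \<in> Gk \<Longrightarrow> i < m \<Longrightarrow> j < r \<Longrightarrow>
   Jp \<omega> (ts (Suc j)) i = Jp \<omega> (ts j) i + card {l. l < k i \<and> bin i (\<zeta> i l \<omega>) = j}"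
proof -
  assume w: "\<omega> \<in> Gk" and i: "i < m" and j: "j < r"
  have e: "{l. l < k i \<and> bin i (\<zeta> i l \<omega>) < Suc j} = {l. l < k i \<and> bin i (\<zeta> i l \<omega>) < j} \<union> {l. l < k i \<and> bin i (\<zeta> i l \<omega>) = j}"
    by auto
  have "card {l. l < k i \<and> bin i (\<zeta> i l \<omega>) < Suc j} = card {l. l < k i \<and> bin i (\<zeta> i l \<omega>) < j} + card {l. l < k i \<and> bin i (\<zeta> i l \<omega>) = j}"
    unfolding e by (rule card_Un_disjoint) auto
  then show ?thesis using Jp_ts[OF w i, of j] Jp_ts[OF w i, of "Suc j"] j by simp
qed

lemma count_bl: "count (mset (bl i \<omega>)) j = card {l. l < k i \<and> bin i (\<zeta> i l \<omega>) = j}"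
  unfolding bl_def by (rule count_map_upt)

lemma bl_lt: "\<omega> \<in> Gk \<Longrightarrow> i < m \<Longrightarrow> l < k i \<Longrightarrow> bin i (\<zeta> i l \<omega>) < r"
  using bin_props Gk_D by blast

lemma Inc_iff:
  assumes w: "\<omega> \<in> Gk"
  shows "IncE m r ts (Jp \<omega>) a \<longleftrightarrow> (\<forall>i<m. mset (bl i \<omega>) = cm r (a i))"
proof
  assume inc: "IncE m r ts (Jp \<omega>) a"
  show "\<forall>i<m. mset (bl i \<omega>) = cm r (a i)"
  proof (intro allI impI multiset_eqI)
    fix i j assume i: "i < m"
    show "count (mset (bl i \<omega>)) j = count (cm r (a i)) j"
    proof (cases "j < r")
      case True
      then show ?thesis using inc Jp_inc[OF w i True] unfolding IncE_def count_bl count_cm using i by auto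
    next
      case False
      have "{l. l < k i \<and> bin i (\<zeta> i l \<omega>) = j} = {}" using bl_lt[OF w i] False by auto
      then show ?thesis unfolding count_bl count_cm using False by simp
    qed
  qed
next
  assume h: "\<forall>i<m. mset (bl i \<omega>) = cm r (a i)"
  show "IncE m r ts (Jp \<omega>) a"
    unfolding IncE_def
  proof (intro allI impI)
    fix i j assume i: "i < m" and j: "j < r"
    have "a i j = count (cm r (a i)) j" unfolding count_cm using j by simp
    also have "\<dots> = card {l. l < k i \<and> bin i (\<zeta> i l \<omega>) = j}" using h i count_bl by metis
    finally show "Jp \<omega> (ts (Suc j)) i = Jp \<omega> (ts j) i + a i j" using Jp_inc[OF w i j] by simp
  qed
qed

definition "Gset a = PiE {..<m} (\<lambda>i. permutations_of_multiset (cm r (a i)))"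
definition "EG g = {\<omega>\<in>space P0. \<forall>i<m. \<forall>l<k i. p i (g i ! l) < \<zeta> i l \<omega> \<and> \<zeta> i l \<omega> \<le> p i (Suc (g i ! l))}"

lemma EG_bl:
  assumes g: "g \<in> Gset a" and sums: "\<forall>i<m. (\<Sum>j<r. a i j) = k i" and w: "\<omega> \<in> EG g"
  shows "\<omega> \<in> Gk" "\<And>i. i < m \<Longrightarrow> bl i \<omega> = g i"
proof -
  have len: "length (g i) = k i" if i: "i < m" for i
  proof -
    have "g i \<in> permutations_of_multiset (cm r (a i))" using g i unfolding Gset_def by auto
    then have "mset (g i) = cm r (a i)" by (rule permutations_of_multisetD)
    then have "length (g i) = size (cm r (a i))" by (metis size_mset)
    then show ?thesis using sums i size_cm by simp
  qed
  have lt: "g i ! l < r" if i: "i < m" and l: "l < k i" for i l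
  proof -
    have "g i \<in> permutations_of_multiset (cm r (a i))" using g i unfolding Gset_def by auto
    then have "mset (g i) = cm r (a i)" by (rule permutations_of_multisetD)
    moreover have "g i ! l \<in> set (g i)" using len[OF i] l by simp
    ultimately have "g i ! l \<in># cm r (a i)" by (metis set_mset_mset)
    then show ?thesis using set_cm by blast
  qed
  have bnd: "p i (g i ! l) < \<zeta> i l \<omega> \<and> \<zeta> i l \<omega> \<le> p i (Suc (g i ! l))" if "i < m" "l < k i" for i l
    using w that unfolding EG_def by auto
  have sp: "\<omega> \<in> space P0" using w unfolding EG_def by auto
  have z01: "0 < \<zeta> i l \<omega> \<and> \<zeta> i l \<omega> \<le> 1" if i: "i < m" and l: "l < k i" for i l
  proof -
    have "0 \<le> p i (g i ! l)" using p_range[OF i, of "g i ! l"] lt[OF i l] by simp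
    moreover have "p i (Suc (g i ! l)) \<le> 1" using p_range[OF i, of "Suc (g i ! l)"] lt[OF i l] by simp
    ultimately show ?thesis using bnd[OF i l] by simp
  qed
  show "\<omega> \<in> Gk" unfolding Gk_def using sp z01 by auto
  show "bl i \<omega> = g i" if i: "i < m" for i
  proof (rule nth_equalityI)
    show "length (bl i \<omega>) = length (g i)" unfolding bl_def using len[OF i] by simp
    fix l assume "l < length (bl i \<omega>)"
    then have l: "l < k i" unfolding bl_def by simp
    have "bin i (\<zeta> i l \<omega>) = g i ! l"
      by (rule bin_unique[OF i lt[OF i l]]) (use bnd[OF i l] in auto)
    then show "bl i \<omega> ! l = g i ! l" unfolding bl_def using l by simp
  qed
qed

lemma GI_eq:
  assumes sums: "\<forall>i<m. (\<Sum>j<r. a i j) = k i"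
  shows "Gk \<inter> {\<omega>\<in>space P0. IncE m r ts (Jp \<omega>) a} = (\<Union>g\<in>Gset a. EG g)"
proof (intro set_eqI iffI)
  fix \<omega> assume "\<omega> \<in> Gk \<inter> {\<omega>\<in>space P0. IncE m r ts (Jp \<omega>) a}"
  then have w: "\<omega> \<in> Gk" and sp: "\<omega> \<in> space P0" and inc: "IncE m r ts (Jp \<omega>) a" unfolding Gk_def by auto
  have ms: "\<forall>i<m. mset (bl i \<omega>) = cm r (a i)" using Inc_iff[OF w] inc by simp
  define g where "g = (\<lambda>i\<in>{..<m}. bl i \<omega>)"
  have "g \<in> Gset a" unfolding Gset_def g_def using ms by (auto intro: permutations_of_multisetI)
  moreover have "\<omega> \<in> EG g"
    unfolding EG_def
  proof (intro CollectI conjI allI impI sp)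
    fix i l assume i: "i < m" and l: "l < k i"
    have x: "0 < \<zeta> i l \<omega>" "\<zeta> i l \<omega> \<le> 1" using Gk_D[OF w i l] by auto
    have "g i ! l = bin i (\<zeta> i l \<omega>)" unfolding g_def bl_def using i l by simp
    then show "p i (g i ! l) < \<zeta> i l \<omega>" "\<zeta> i l \<omega> \<le> p i (Suc (g i ! l))"
      using bin_props[OF i x] by auto
  qed
  ultimately show "\<omega> \<in> (\<Union>g\<in>Gset a. EG g)" by blast
next
  fix \<omega> assume "\<omega> \<in> (\<Union>g\<in>Gset a. EG g)"
  then obtain g where g: "g \<in> Gset a" and w: "\<omega> \<in> EG g" by blast
  have gk: "\<omega> \<in> Gk" by (rule EG_bl(1)[OF g sums w])
  have "\<forall>i<m. mset (bl i \<omega>) = cm r (a i)"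
  proof (intro allI impI)
    fix i assume i: "i < m"
    have "g i \<in> permutations_of_multiset (cm r (a i))" using g i unfolding Gset_def by auto
    then have "mset (g i) = cm r (a i)" by (rule permutations_of_multisetD)
    then show "mset (bl i \<omega>) = cm r (a i)" using EG_bl(2)[OF g sums w i] by simp
  qed
  then have "IncE m r ts (Jp \<omega>) a" using Inc_iff[OF gk] by simp
  moreover have "\<omega> \<in> space P0" using w unfolding EG_def by auto
  ultimately show "\<omega> \<in> Gk \<inter> {\<omega>\<in>space P0. IncE m r ts (Jp \<omega>) a}" using gk by auto
qed

lemma EG_disj:
  assumes sums: "\<forall>i<m. (\<Sum>j<r. a i j) = k i" and g: "g \<in> Gset a" and g': "g' \<in> Gset a" and ne: "g \<noteq> g'"
  shows "EG g \<inter> EG g' = {}"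
proof (rule ccontr)
  assume "EG g \<inter> EG g' \<noteq> {}"
  then obtain \<omega> where w: "\<omega> \<in> EG g" "\<omega> \<in> EG g'" by blast
  have "g = g'"
  proof (rule PiE_ext)
    show "g \<in> PiE {..<m} (\<lambda>i. permutations_of_multiset (cm r (a i)))" using g unfolding Gset_def .
    show "g' \<in> PiE {..<m} (\<lambda>i. permutations_of_multiset (cm r (a i)))" using g' unfolding Gset_def .
    fix i assume "i \<in> {..<m}"
    then have i: "i < m" by simp
    show "g i = g' i" using EG_bl(2)[OF g sums w(1) i] EG_bl(2)[OF g' sums w(2) i] by simp
  qed
  then show False using ne by simp
qed

end

context P3g begin

lemma Gset_lt:
  assumes g: "g \<in> Gset a" and sums: "\<forall>i<m. (\<Sum>j<r. a i j) = k i" and i: "i < m" and l: "l < k i"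
  shows "g i ! l < r"
proof -
  have "g i \<in> permutations_of_multiset (cm r (a i))" using g i unfolding Gset_def by auto
  then have ms: "mset (g i) = cm r (a i)" by (rule permutations_of_multisetD)
  then have "length (g i) = size (cm r (a i))" by (metis size_mset)
  then have "length (g i) = k i" using sums i size_cm by simp
  then have "g i ! l \<in> set (g i)" using l by simp
  then have "g i ! l \<in># cm r (a i)" using ms by (metis set_mset_mset)
  then show ?thesis using set_cm by blast
qed

lemma Gset_len:
  assumes g: "g \<in> Gset a" and sums: "\<forall>i<m. (\<Sum>j<r. a i j) = k i" and i: "i < m"
  shows "length (g i) = k i"
proof -
  have "g i \<in> permutations_of_multiset (cm r (a i))" using g i unfolding Gset_def by auto
  then have ms: "mset (g i) = cm r (a i)" by (rule permutations_of_multisetD)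
  then have "length (g i) = size (cm r (a i))" by (metis size_mset)
  then show ?thesis using sums i size_cm by simp
qed

lemma EG_P0: "EG g \<in> sets P0"
proof -
  have a0: "{\<omega>\<in>space P0. l < k i \<longrightarrow> p i (g i ! l) < \<zeta> i l \<omega> \<and> \<zeta> i l \<omega> \<le> p i (Suc (g i ! l))} \<in> sets P0" for i l
    by (rule sets.sets_Collect_imp[OF in_P0[OF Zint_SS] sets.sets_Collect_const])
  have a: "{\<omega>\<in>space P0. \<forall>l. l < k i \<longrightarrow> p i (g i ! l) < \<zeta> i l \<omega> \<and> \<zeta> i l \<omega> \<le> p i (Suc (g i ! l))} \<in> sets P0" for i
    by (rule sets.sets_Collect_countable_All[OF a0])
  have b: "{\<omega>\<in>space P0. i < m \<longrightarrow> (\<forall>l. l < k i \<longrightarrow> p i (g i ! l) < \<zeta> i l \<omega> \<and> \<zeta> i l \<omega> \<le> p i (Suc (g i ! l)))} \<in> sets P0" for i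
    by (rule sets.sets_Collect_imp[OF a sets.sets_Collect_const])
  show ?thesis unfolding EG_def by (rule sets.sets_Collect_countable_All[OF b])
qed

definition "wg g = (\<Prod>i<m. \<Prod>l<k i. p i (Suc (g i ! l)) - p i (g i ! l))"

lemma Fn_EG:
  assumes g: "g \<in> Gset a" and sums: "\<forall>i<m. (\<Sum>j<r. a i j) = k i"
  shows "measure P0 (Fn n \<inter> EG g) = measure P0 (Fn n) * wg g"
proof -
  define Ph where "Ph j = (if j < n then {\<omega>\<in>space P0. \<not> Pn \<omega> j} else {\<omega>\<in>space P0. Zf n \<omega> = z0 \<and> Kp n \<omega> = kp})" for j
  define Sig where "Sig = (SIGMA i:{..<m}. {..<k i})"
  define V where "V i l = {\<omega>\<in>space P0. p i (g i ! l) < \<zeta> i l \<omega> \<and> \<zeta> i l \<omega> \<le> p i (Suc (g i ! l))}" for i l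
  have Ph: "Ph j \<in> SS (Filt j)" if "j \<le> n" for j
    using that nPn_SS F_ev unfolding Ph_def by auto
  have fS: "finite Sig" unfolding Sig_def by simp
  have V: "V i l \<in> SS (Unif i l)" for i l unfolding V_def by (rule Zint_SS)
  have ip: "measure M (Obs \<inter> (\<Inter>j\<in>{..n}. Ph j) \<inter> (\<Inter>il\<in>Sig. V (fst il) (snd il)))
       = measure M (Obs \<inter> (\<Inter>j\<in>{..n}. Ph j)) * (\<Prod>il\<in>Sig. measure M (V (fst il) (snd il)))"
    by (rule indep_prod[OF Obs_SS Ph fS V])
  have ObsS: "Obs \<subseteq> space P0" unfolding obs_event_def by auto
  have e1: "Fn n = Op \<inter> (Obs \<inter> (\<Inter>j\<in>{..n}. Ph j))"
  proof (intro set_eqI iffI)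
    fix \<omega> assume w: "\<omega> \<in> Fn n"
    show "\<omega> \<in> Op \<inter> (Obs \<inter> (\<Inter>j\<in>{..n}. Ph j))"
      using w unfolding Fn_def Ph_def by (auto simp: le_less)
  next
    fix \<omega> assume w: "\<omega> \<in> Op \<inter> (Obs \<inter> (\<Inter>j\<in>{..n}. Ph j))"
    then have "\<omega> \<in> Ph n" by auto
    then have a: "Zf n \<omega> = z0 \<and> Kp n \<omega> = kp" unfolding Ph_def by simp
    have b: "\<forall>j<n. \<not> Pn \<omega> j"
    proof (intro allI impI)
      fix j assume j: "j < n"
      then have "\<omega> \<in> Ph j" using w by auto
      then show "\<not> Pn \<omega> j" unfolding Ph_def using j by simp
    qed
    show "\<omega> \<in> Fn n" unfolding Fn_def using a b w ObsS by auto
  qed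
  have e2: "EG g = space P0 \<inter> (\<Inter>il\<in>Sig. V (fst il) (snd il))"
    unfolding EG_def V_def Sig_def by auto
  have e3: "Fn n \<inter> EG g = Op \<inter> (Obs \<inter> (\<Inter>j\<in>{..n}. Ph j) \<inter> (\<Inter>il\<in>Sig. V (fst il) (snd il)))"
    unfolding e1 e2 using ObsS by auto
  have s1: "Obs \<inter> (\<Inter>j\<in>{..n}. Ph j) \<in> sets P0"
    using Obs_P0 in_P0[OF Ph] by (intro sets.Int sets.finite_INT) auto
  have s2: "Obs \<inter> (\<Inter>j\<in>{..n}. Ph j) \<inter> (\<Inter>il\<in>Sig. V (fst il) (snd il)) \<in> sets P0"
  proof -
    have "Obs \<inter> (\<Inter>j\<in>{..n}. Ph j) \<inter> (\<Inter>il\<in>Sig. V (fst il) (snd il)) = (Obs \<inter> (\<Inter>j\<in>{..n}. Ph j)) \<inter> EG g"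
      unfolding e2 using ObsS by auto
    then show ?thesis using s1 EG_P0 by simp
  qed
  have mV: "measure M (V i l) = p i (Suc (g i ! l)) - p i (g i ! l)" if "(i, l) \<in> Sig" for i l
  proof -
    have i: "i < m" and l: "l < k i" using that unfolding Sig_def by auto
    have lt: "g i ! l < r" by (rule Gset_lt[OF g sums i l])
    show ?thesis unfolding V_def
      by (rule measM_U) (use p_range[OF i, of "g i ! l"] p_range[OF i, of "Suc (g i ! l)"] p_mono[OF i, of "g i ! l" "Suc (g i ! l)"] lt in auto)
  qed
  have pw: "(\<Prod>il\<in>Sig. measure M (V (fst il) (snd il))) = wg g"
  proof -
    have "(\<Prod>il\<in>Sig. measure M (V (fst il) (snd il))) = (\<Prod>il\<in>Sig. p (fst il) (Suc (g (fst il) ! snd il)) - p (fst il) (g (fst il) ! snd il))"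
      using mV by (intro prod.cong refl) auto
    also have "\<dots> = wg g" unfolding wg_def Sig_def by (subst prod.Sigma) (auto simp: split_beta)
    finally show ?thesis .
  qed
  have "measure P0 (Fn n \<inter> EG g) = measure P0 Op * measure M (Obs \<inter> (\<Inter>j\<in>{..n}. Ph j) \<inter> (\<Inter>il\<in>Sig. V (fst il) (snd il)))"
    unfolding e3 measM[OF s2] using Op_pos by simp
  also have "\<dots> = measure P0 Op * measure M (Obs \<inter> (\<Inter>j\<in>{..n}. Ph j)) * wg g"
    unfolding ip pw by simp
  also have "measure P0 Op * measure M (Obs \<inter> (\<Inter>j\<in>{..n}. Ph j)) = measure P0 (Fn n)"
    unfolding e1 measM[OF s1] using Op_pos by simp
  finally show ?thesis .
qed

end

context P3g begin

definition "Cg a = (\<Sum>g\<in>Gset a. wg g)"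

lemma Gset_finite: "finite (Gset a)"
  unfolding Gset_def by (intro finite_PiE) auto

lemma BI_Inc:
  assumes sums: "\<forall>i<m. (\<Sum>j<r. a i j) = k i"
  shows "measure P0 (BI \<inter> {\<omega>\<in>space P0. IncE m r ts (Jp \<omega>) a}) = measure P0 FF * Cg a"
proof -
  interpret prob_space P0 by (rule P0)
  define X where "X = (\<Union>g\<in>Gset a. EG g)"
  have XS: "X \<in> sets P0" unfolding X_def using Gset_finite EG_P0 by auto
  have e: "BI \<inter> {\<omega>\<in>space P0. IncE m r ts (Jp \<omega>) a} = FF \<inter> X"
    unfolding BI_def X_def GI_eq[OF sums, symmetric] by auto
  have fnX: "measure P0 (Fn n \<inter> X) = measure P0 (Fn n) * Cg a" for n
  proof -
    have "Fn n \<inter> X = (\<Union>g\<in>Gset a. Fn n \<inter> EG g)" unfolding X_def by auto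
    then have "measure P0 (Fn n \<inter> X) = (\<Sum>g\<in>Gset a. measure P0 (Fn n \<inter> EG g))"
    proof (simp only:)
      show "measure P0 (\<Union>g\<in>Gset a. Fn n \<inter> EG g) = (\<Sum>g\<in>Gset a. measure P0 (Fn n \<inter> EG g))"
      proof (rule finite_measure_finite_Union)
        show "finite (Gset a)" by (rule Gset_finite)
        show "(\<lambda>g. Fn n \<inter> EG g) ` Gset a \<subseteq> sets P0" using Fn_P0 EG_P0 by auto
        show "disjoint_family_on (\<lambda>g. Fn n \<inter> EG g) (Gset a)"
          unfolding disjoint_family_on_def using EG_disj[OF sums] by blast
      qed
    qed
    also have "\<dots> = (\<Sum>g\<in>Gset a. measure P0 (Fn n) * wg g)"
      using Fn_EG[OF _ sums] by simp
    finally show ?thesis unfolding Cg_def by (simp add: sum_distrib_left)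
  qed
  have disjF: "disjoint_family Fn" unfolding disjoint_family_on_def using Fn_disj by blast
  have s1: "(\<lambda>n. measure P0 (Fn n \<inter> X)) sums measure P0 (\<Union>n. Fn n \<inter> X)"
  proof (rule measure_UNION)
    show "range (\<lambda>n. Fn n \<inter> X) \<subseteq> sets P0" using Fn_P0 XS by auto
    show "disjoint_family (\<lambda>n. Fn n \<inter> X)" using disjF unfolding disjoint_family_on_def by blast
    show "emeasure P0 (\<Union>n. Fn n \<inter> X) \<noteq> \<infinity>" by simp
  qed
  have s2: "(\<lambda>n. measure P0 (Fn n)) sums measure P0 (\<Union>n. Fn n)"
    by (rule measure_UNION) (use Fn_P0 disjF in auto)
  have "(\<lambda>n. measure P0 (Fn n) * Cg a) sums (measure P0 (\<Union>n. Fn n) * Cg a)"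
    by (rule sums_mult2[OF s2])
  moreover have "(\<lambda>n. measure P0 (Fn n) * Cg a) sums measure P0 (\<Union>n. Fn n \<inter> X)"
    using s1 fnX by simp
  ultimately have "measure P0 (\<Union>n. Fn n \<inter> X) = measure P0 (\<Union>n. Fn n) * Cg a"
    using sums_unique2 by blast
  moreover have "(\<Union>n. Fn n \<inter> X) = FF \<inter> X" unfolding FF_def by auto
  ultimately show ?thesis unfolding e FF_def by simp
qed

lemma Cg_closed:
  assumes sums: "\<forall>i<m. (\<Sum>j<r. a i j) = k i"
  shows "Cg a = (\<Prod>i<m. real (card (permutations_of_multiset (cm r (a i)))) *
                      (\<Prod>j<r. (p i (Suc j) - p i j) ^ a i j))"
proof -
  have "Cg a = (\<Sum>g\<in>Gset a. \<Prod>i<m. \<Prod>l<k i. p i (Suc (g i ! l)) - p i (g i ! l))"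
    unfolding Cg_def wg_def ..
  also have "\<dots> = (\<Prod>i<m. \<Sum>xs\<in>permutations_of_multiset (cm r (a i)). \<Prod>l<k i. p i (Suc (xs ! l)) - p i (xs ! l))"
    unfolding Gset_def by (rule prod_sum_PiE[symmetric]) auto
  also have "\<dots> = (\<Prod>i<m. real (card (permutations_of_multiset (cm r (a i)))) *
                      (\<Prod>j<r. (p i (Suc j) - p i j) ^ a i j))"
  proof (intro prod.cong refl)
    fix i assume i: "i \<in> {..<m}"
    have "(\<Sum>xs\<in>permutations_of_multiset (cm r (a i)). \<Prod>l<k i. p i (Suc (xs ! l)) - p i (xs ! l))
        = (\<Sum>xs\<in>permutations_of_multiset (cm r (a i)). \<Prod>l<length xs. p i (Suc (xs ! l)) - p i (xs ! l))"
    proof (intro sum.cong refl)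
      fix xs assume "xs \<in> permutations_of_multiset (cm r (a i))"
      then have "mset xs = cm r (a i)" by (rule permutations_of_multisetD)
      then have "length xs = size (cm r (a i))" by (metis size_mset)
      then have "length xs = k i" using sums i size_cm by simp
      then show "(\<Prod>l<k i. p i (Suc (xs ! l)) - p i (xs ! l)) = (\<Prod>l<length xs. p i (Suc (xs ! l)) - p i (xs ! l))" by simp
    qed
    also have "\<dots> = real (card (permutations_of_multiset (cm r (a i)))) * (\<Prod>j<r. (p i (Suc j) - p i j) ^ count (cm r (a i)) j)"
      by (rule sum_perms[OF set_cm])
    also have "(\<Prod>j<r. (p i (Suc j) - p i j) ^ count (cm r (a i)) j) = (\<Prod>j<r. (p i (Suc j) - p i j) ^ a i j)"
      by (intro prod.cong refl) (simp add: count_cm)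
    finally show "(\<Sum>xs\<in>permutations_of_multiset (cm r (a i)). \<Prod>l<k i. p i (Suc (xs ! l)) - p i (xs ! l))
        = real (card (permutations_of_multiset (cm r (a i)))) * (\<Prod>j<r. (p i (Suc j) - p i j) ^ a i j)" .
  qed
  finally show ?thesis .
qed

lemma PK_pos: "PK > 0"
  unfolding PK_def poisson_prob_def
proof (intro prod_pos ballI)
  fix i assume i: "i \<in> {..<m}"
  have "Lam i 0 T = et i T" unfolding Lam_def eta_def ..
  then have "Lam i 0 T > 0" using et_T_pos i by simp
  then show "0 < exp (- Lam i 0 T) * Lam i 0 T ^ k i / fact (k i)" by simp
qed

lemma ratio:
  assumes sums: "\<forall>i<m. (\<Sum>j<r. a i j) = k i"
  shows "PR r ts a / PK = Cg a"
proof -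
  have "PR r ts a / PK = (\<Prod>i<m. (\<Prod>j<r. poisson_prob (Lam i (ts j) (ts (Suc j))) (a i j)) / poisson_prob (Lam i 0 T) (k i))"
    unfolding PR_def PK_def by (rule prod_dividef[symmetric])
  also have "\<dots> = (\<Prod>i<m. real (card (permutations_of_multiset (cm r (a i)))) *
                      (\<Prod>j<r. (p i (Suc j) - p i j) ^ a i j))"
  proof (intro prod.cong refl)
    fix i assume "i \<in> {..<m}"
    then have i: "i < m" by simp
    have LT: "Lam i 0 T = (\<Sum>j<r. Lam i (ts j) (ts (Suc j)))"
      using Lam_sum[OF i] unfolding Lam_def eta_def by simp
    have kk: "k i = (\<Sum>j<r. a i j)" using sums i by simp
    have pos: "(\<Sum>j<r. Lam i (ts j) (ts (Suc j))) > 0" using Lam_sum[OF i] et_T_pos[OF i] by simp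
    have "(\<Prod>j<r. poisson_prob (Lam i (ts j) (ts (Suc j))) (a i j)) / poisson_prob (Lam i 0 T) (k i)
       = fact (\<Sum>j<r. a i j) / (\<Prod>j<r. fact (a i j)) * (\<Prod>j<r. (Lam i (ts j) (ts (Suc j)) / (\<Sum>j<r. Lam i (ts j) (ts (Suc j)))) ^ a i j)"
      unfolding LT kk by (rule poisson_ratio[OF pos])
    also have "fact (\<Sum>j<r. a i j) / (\<Prod>j<r. fact (a i j)) = real (card (permutations_of_multiset (cm r (a i))))"
    proof -
      have "real (card (permutations_of_multiset (cm r (a i)))) = fact (size (cm r (a i))) / (\<Prod>j<r. fact (count (cm r (a i)) j))"
        by (rule card_perms_real[OF set_cm])
      also have "\<dots> = fact (\<Sum>j<r. a i j) / (\<Prod>j<r. fact (a i j))"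
        unfolding size_cm by (simp add: count_cm)
      finally show ?thesis by simp
    qed
    also have "(\<Prod>j<r. (Lam i (ts j) (ts (Suc j)) / (\<Sum>j<r. Lam i (ts j) (ts (Suc j)))) ^ a i j)
             = (\<Prod>j<r. (p i (Suc j) - p i j) ^ a i j)"
      using w_eq[OF i] Lam_sum[OF i] by (intro prod.cong refl) simp
    finally show "(\<Prod>j<r. poisson_prob (Lam i (ts j) (ts (Suc j))) (a i j)) / poisson_prob (Lam i 0 T) (k i)
       = real (card (permutations_of_multiset (cm r (a i)))) * (\<Prod>j<r. (p i (Suc j) - p i j) ^ a i j)" .
  qed
  also have "\<dots> = Cg a" using Cg_closed[OF sums] by simp
  finally show ?thesis .
qed

end

lemma card_sum_ind: "real (card {l. l < (K::nat) \<and> P l}) = (\<Sum>l<K. if P l then 1 else 0)"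
proof -
  have "{l. l < K \<and> P l} = {l\<in>{..<K}. P l}" by auto
  then have "real (card {l. l < K \<and> P l}) = (\<Sum>l\<in>{l\<in>{..<K}. P l}. 1)" by simp
  also have "\<dots> = (\<Sum>l<K. if P l then 1 else 0)" by (rule sum.inter_filter) simp
  finally show ?thesis .
qed

context P3 begin

lemma Jp_meas_real: "(\<lambda>\<omega>. real (Jp \<omega> t i)) \<in> borel_measurable P0"
proof (cases "i < m")
  case True
  have e: "(\<lambda>\<omega>. real (Jp \<omega> t i)) = (\<lambda>\<omega>. \<Sum>l<k i. if \<zeta> i l \<omega> \<le> et i t / et i T then 1 else 0)"
    unfolding Jp_def using True by (simp add: card_sum_ind)
  have "(\<lambda>\<omega>. if \<zeta> i l \<omega> \<le> et i t / et i T then 1 else (0::real)) \<in> borel_measurable P0" for l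
  proof -
    have "{\<omega>\<in>space P0. \<zeta> i l \<omega> \<le> et i t / et i T} \<in> sets P0" using in_P0[OF U_ev] .
    then have "(\<lambda>\<omega>. indicator {\<omega>\<in>space P0. \<zeta> i l \<omega> \<le> et i t / et i T} \<omega> :: real) \<in> borel_measurable P0"
      by (rule borel_measurable_indicator)
    moreover have "\<And>\<omega>. \<omega> \<in> space P0 \<Longrightarrow> indicator {\<omega>\<in>space P0. \<zeta> i l \<omega> \<le> et i t / et i T} \<omega> = (if \<zeta> i l \<omega> \<le> et i t / et i T then 1 else (0::real))"
      by (auto simp: indicator_def)
    ultimately show ?thesis by (rule measurable_cong[THEN iffD1, rotated])
  qed
  then show ?thesis unfolding e by (intro borel_measurable_sum) auto
next
  case False
  then show ?thesis unfolding Jp_def by simp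
qed

lemma Jp_eq_ev: "{\<omega>\<in>space P0. Jp \<omega> t i = c} \<in> sets P0"
proof -
  have "{\<omega>\<in>space P0. Jp \<omega> t i = c} = (\<lambda>\<omega>. real (Jp \<omega> t i)) -` {real c} \<inter> space P0" by auto
  also have "\<dots> \<in> sets P0" by (rule measurable_sets[OF Jp_meas_real]) simp
  finally show ?thesis .
qed

lemma Jp_pair_ev: "{\<omega>\<in>space P0. Jp \<omega> t i = Jp \<omega> s i + d} \<in> sets P0"
proof -
  have "{\<omega>\<in>space P0. Jp \<omega> t i = Jp \<omega> s i + d} = {\<omega>\<in>space P0. \<exists>c. Jp \<omega> s i = c \<and> Jp \<omega> t i = c + d}" by auto
  also have "\<dots> \<in> sets P0"
  proof (rule sets.sets_Collect_countable_Ex)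
    fix c
    show "{\<omega>\<in>space P0. Jp \<omega> s i = c \<and> Jp \<omega> t i = c + d} \<in> sets P0"
      by (rule sets.sets_Collect_conj[OF Jp_eq_ev Jp_eq_ev])
  qed
  finally show ?thesis .
qed

lemma IncJ_ev: "{\<omega>\<in>space P0. IncE m r ts (Jp \<omega>) a} \<in> sets P0"
proof -
  have a: "{\<omega>\<in>space P0. j < r \<longrightarrow> Jp \<omega> (ts (Suc j)) i = Jp \<omega> (ts j) i + a i j} \<in> sets P0" for i j
    by (rule sets.sets_Collect_imp[OF Jp_pair_ev sets.sets_Collect_const])
  have b: "{\<omega>\<in>space P0. \<forall>j. j < r \<longrightarrow> Jp \<omega> (ts (Suc j)) i = Jp \<omega> (ts j) i + a i j} \<in> sets P0" for i
    by (rule sets.sets_Collect_countable_All[OF a])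
  have c: "{\<omega>\<in>space P0. i < m \<longrightarrow> (\<forall>j. j < r \<longrightarrow> Jp \<omega> (ts (Suc j)) i = Jp \<omega> (ts j) i + a i j)} \<in> sets P0" for i
    by (rule sets.sets_Collect_imp[OF b sets.sets_Collect_const])
  show ?thesis unfolding IncE_def by (rule sets.sets_Collect_countable_All[OF c])
qed

end

context P3g begin

lemma I_cyl:
  assumes J: "J \<subseteq> ts ` {..r}"
  shows "measure P0 (BI \<inter> {\<omega>\<in>space P0. \<forall>t\<in>J. vecR m (Jp \<omega> t) \<in> A t})
         = (\<Sum>a\<in>Adm m k r ts J A. measure P0 FF * Cg a)"
proof -
  interpret prob_space P0 by (rule P0)
  have e: "BI \<inter> {\<omega>\<in>space P0. \<forall>t\<in>J. vecR m (Jp \<omega> t) \<in> A t}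
        = (\<Union>a\<in>Adm m k r ts J A. BI \<inter> {\<omega>\<in>space P0. IncE m r ts (Jp \<omega>) a})"
  proof (intro set_eqI)
    fix \<omega>
    show "\<omega> \<in> BI \<inter> {\<omega>\<in>space P0. \<forall>t\<in>J. vecR m (Jp \<omega> t) \<in> A t} \<longleftrightarrow>
          \<omega> \<in> (\<Union>a\<in>Adm m k r ts J A. BI \<inter> {\<omega>\<in>space P0. IncE m r ts (Jp \<omega>) a})"
    proof (cases "\<omega> \<in> BI")
      case True
      then have w: "\<omega> \<in> Gk" and sp: "\<omega> \<in> space P0" unfolding BI_def Gk_def by auto
      have X0: "Jp \<omega> (ts 0) = (\<lambda>_. 0)"
      proof
        fix i show "Jp \<omega> (ts 0) i = 0"
        proof (cases "i < m")
          case True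
          have "{l. l < k i \<and> bin i (\<zeta> i l \<omega>) < 0} = {}" by simp
          then show ?thesis using Jp_ts[OF w True, of 0] by simp
        next
          case False then show ?thesis unfolding Jp_def by simp
        qed
      qed
      have XT: "Jp \<omega> (ts r) = k"
      proof
        fix i show "Jp \<omega> (ts r) i = k i"
        proof (cases "i < m")
          case True
          have "{l. l < k i \<and> bin i (\<zeta> i l \<omega>) < r} = {l. l < k i}" using bl_lt[OF w True] by auto
          then show ?thesis using Jp_ts[OF w True, of r] by simp
        next
          case False then show ?thesis using k_vec unfolding Jp_def vecs_def by simp
        qed
      qed
      have Xv: "\<forall>j\<le>r. Jp \<omega> (ts j) \<in> vecs m" unfolding Jp_def vecs_def by auto
      have Xm: "\<forall>j<r. \<forall>i<m. Jp \<omega> (ts j) i \<le> Jp \<omega> (ts (Suc j)) i"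
        using Jp_inc[OF w] by simp
      have d: "(\<forall>t\<in>J. vecR m (Jp \<omega> t) \<in> A t) \<longleftrightarrow> (\<exists>a\<in>Adm m k r ts J A. IncE m r ts (Jp \<omega>) a)"
        by (rule decomp[OF X0 XT k_vec Xv Xm J])
      show ?thesis using d True sp by auto
    next
      case False then show ?thesis by auto
    qed
  qed
  have "measure P0 (\<Union>a\<in>Adm m k r ts J A. BI \<inter> {\<omega>\<in>space P0. IncE m r ts (Jp \<omega>) a})
        = (\<Sum>a\<in>Adm m k r ts J A. measure P0 (BI \<inter> {\<omega>\<in>space P0. IncE m r ts (Jp \<omega>) a}))"
  proof (rule finite_measure_finite_Union)
    show "finite (Adm m k r ts J A)" by (rule Adm_finite)
    show "(\<lambda>a. BI \<inter> {\<omega>\<in>space P0. IncE m r ts (Jp \<omega>) a}) ` Adm m k r ts J A \<subseteq> sets P0"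
      using BI_P0 IncJ_ev by auto
    show "disjoint_family_on (\<lambda>a. BI \<inter> {\<omega>\<in>space P0. IncE m r ts (Jp \<omega>) a}) (Adm m k r ts J A)"
      unfolding disjoint_family_on_def
    proof (intro ballI impI)
      fix a b assume ab: "a \<in> Adm m k r ts J A" "b \<in> Adm m k r ts J A" "a \<noteq> b"
      then have "a \<in> Abox m k r" "b \<in> Abox m k r" unfolding Adm_def by auto
      then show "BI \<inter> {\<omega>\<in>space P0. IncE m r ts (Jp \<omega>) a} \<inter> (BI \<inter> {\<omega>\<in>space P0. IncE m r ts (Jp \<omega>) b}) = {}"
        using Inc_unique ab(3) by blast
    qed
  qed
  also have "\<dots> = (\<Sum>a\<in>Adm m k r ts J A. measure P0 FF * Cg a)"
  proof (intro sum.cong refl)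
    fix a assume "a \<in> Adm m k r ts J A"
    then have "\<forall>i<m. (\<Sum>j<r. a i j) = k i" unfolding Adm_def by auto
    then show "measure P0 (BI \<inter> {\<omega>\<in>space P0. IncE m r ts (Jp \<omega>) a}) = measure P0 FF * Cg a"
      using BI_Inc[of a] by simp
  qed
  finally show ?thesis unfolding e .
qed

lemma cyl_ratio:
  assumes J: "J \<subseteq> ts ` {..r}"
  shows "measure P0 (ER \<inter> {\<omega>\<in>space P0. \<forall>t\<in>J. vecR m (R \<omega> t) \<in> A t}) / measure P0 ER
       = measure P0 (BI \<inter> {\<omega>\<in>space P0. \<forall>t\<in>J. vecR m (Jp \<omega> t) \<in> A t}) / measure P0 FF"
proof -
  have Oz0: "measure P0 Oz \<noteq> 0" using condR_pos ER_meas unfolding ER_def by auto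
  have FF0: "measure P0 FF \<noteq> 0"
  proof
    assume "measure P0 FF = 0"
    then have "measure P0 BI = 0" using BI_FF by simp
    moreover have "measure P0 EI \<le> measure P0 BI + measure P0 (Op - Gall)"
    proof -
      interpret prob_space P0 by (rule P0)
      have "EI \<subseteq> BI \<union> (Op - Gall)" using EI_Gall_sub unfolding EI_def BI_def Gall_def Gk_def by auto
      then have "measure P0 EI \<le> measure P0 (BI \<union> (Op - Gall))"
        using BI_P0 Op_ev Gall_P0 by (intro finite_measure_mono) auto
      also have "\<dots> \<le> measure P0 BI + measure P0 (Op - Gall)"
        using BI_P0 Op_ev Gall_P0 by (intro measure_Un_le) auto
      finally show ?thesis .
    qed
    moreover have "measure P0 (Op - Gall) = 0" using Gall_null by (simp add: measure_def)
    ultimately have "measure P0 EI \<le> 0" by simp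
    then show False using condI_pos unfolding EI_def by simp
  qed
  have "measure P0 (ER \<inter> {\<omega>\<in>space P0. \<forall>t\<in>J. vecR m (R \<omega> t) \<in> A t}) / measure P0 ER
       = (\<Sum>a\<in>Adm m k r ts J A. measure P0 Oz * PR r ts a) / (measure P0 Oz * PK)"
    using R_cyl[OF ts0 tsr tsT tsmono J, of A] ER_meas by simp
  also have "\<dots> = (\<Sum>a\<in>Adm m k r ts J A. PR r ts a / PK)"
    using Oz0 by (simp add: sum_divide_distrib sum_distrib_left[symmetric])
  also have "\<dots> = (\<Sum>a\<in>Adm m k r ts J A. Cg a)"
  proof (intro sum.cong refl)
    fix a assume "a \<in> Adm m k r ts J A"
    then have "\<forall>i<m. (\<Sum>j<r. a i j) = k i" unfolding Adm_def by auto
    then show "PR r ts a / PK = Cg a" by (rule ratio)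
  qed
  also have "\<dots> = (\<Sum>a\<in>Adm m k r ts J A. measure P0 FF * Cg a) / measure P0 FF"
    using FF0 by (simp add: sum_divide_distrib)
  also have "\<dots> = measure P0 (BI \<inter> {\<omega>\<in>space P0. \<forall>t\<in>J. vecR m (Jp \<omega> t) \<in> A t}) / measure P0 FF"
    using I_cyl[OF J, of A] by simp
  finally show ?thesis .
qed

end


lemma path_emb:
  assumes J: "J \<subseteq> {0..T}"
  shows "as_path m T p \<in> prod_emb {0..T} (\<lambda>_. PiM {..<m} (\<lambda>_. borel)) J (PiE J A)
     \<longleftrightarrow> (\<forall>t\<in>J. vecR m (p t) \<in> A t)"
proof -
  have ext: "as_path m T p \<in> extensional {0..T}" unfolding as_path_def by simp
  have sp: "\<forall>t\<in>{0..T}. as_path m T p t \<in> space (PiM {..<m} (\<lambda>_. borel :: real measure))"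
    unfolding as_path_def space_PiM by auto
  have r: "restrict (as_path m T p) J \<in> PiE J A \<longleftrightarrow> (\<forall>t\<in>J. vecR m (p t) \<in> A t)"
    using J unfolding as_path_def vecR_def by (auto simp: PiE_iff)
  show ?thesis unfolding prod_emb_iff using ext sp r by simp
qed

context P3 begin

lemma cyl_ratio_P3:
  assumes fJ: "finite J" and J: "J \<subseteq> {0..T}"
  shows "measure P0 (ER \<inter> {\<omega>\<in>space P0. \<forall>t\<in>J. vecR m (R \<omega> t) \<in> A t}) / measure P0 ER
       = measure P0 (BI \<inter> {\<omega>\<in>space P0. \<forall>t\<in>J. vecR m (Jp \<omega> t) \<in> A t}) / measure P0 BI"
proof -
  obtain r ts where g: "r \<ge> 1" "ts 0 = 0" "ts r = T" "\<And>j. j < r \<Longrightarrow> ts j < ts (Suc j)"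
    "\<And>j. j \<le> r \<Longrightarrow> ts j \<in> {0..T}" "J \<subseteq> ts ` {..r}"
    using grid[OF T_pos fJ J] by blast
  have "P3g n1 n2 m1 m2 T y \<nu> lam \<mu> P0 Z0 R Op Zf Kp \<zeta> \<phi> k z0 r ts"
    unfolding P3g_def P3g_axioms_def using P3_axioms g by blast
  then interpret G: P3g n1 n2 m1 m2 T y \<nu> lam \<mu> P0 Z0 R Op Zf Kp \<zeta> \<phi> k z0 r ts .
  show ?thesis using G.cyl_ratio[OF g(6), of A] BI_FF by simp
qed

lemma R_path_meas: "(\<lambda>\<omega>. as_path m T (R \<omega>)) \<in> measurable P0 (path_space m T)"
  unfolding path_space_def as_path_def
proof (intro measurable_restrict)
  fix t i assume t: "t \<in> {0..T}" and "i \<in> {..<m}"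
  have "(\<lambda>\<omega>. R \<omega> t i) \<in> measurable P0 (count_space UNIV)" by (rule R_meas[OF t])
  then show "(\<lambda>\<omega>. real (R \<omega> t i)) \<in> borel_measurable P0"
    by (rule measurable_compose) simp
qed

lemma J_path_meas: "(\<lambda>\<omega>. as_path m T (Jp \<omega>)) \<in> measurable P0 (path_space m T)"
  unfolding path_space_def as_path_def
  by (intro measurable_restrict Jp_meas_real)

lemma phi_ennreal_meas: "(\<lambda>x. ennreal (\<phi> x)) \<in> borel_measurable (path_space m T)"
  using phi_meas by measurable

lemma ER_pos: "measure P0 ER > 0" using condR_pos unfolding ER_def by simp

lemma BI_pos: "measure P0 BI > 0"
proof -
  interpret prob_space P0 by (rule P0)
  have "EI \<subseteq> BI \<union> (Op - Gall)" using EI_Gall_sub unfolding EI_def BI_def Gall_def Gk_def by auto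
  then have "measure P0 EI \<le> measure P0 (BI \<union> (Op - Gall))"
    using BI_P0 Op_ev Gall_P0 by (intro finite_measure_mono) auto
  also have "\<dots> \<le> measure P0 BI + measure P0 (Op - Gall)"
    using BI_P0 Op_ev Gall_P0 by (intro measure_Un_le) auto
  also have "measure P0 (Op - Gall) = 0" using Gall_null by (simp add: measure_def)
  finally have "measure P0 EI \<le> measure P0 BI" by simp
  moreover have "measure P0 EI > 0" using condI_pos unfolding EI_def by simp
  ultimately show ?thesis by simp
qed

lemma distr_eq:
  "distr (uniform_measure P0 ER) (path_space m T) (\<lambda>\<omega>. as_path m T (R \<omega>))
   = distr (uniform_measure P0 BI) (path_space m T) (\<lambda>\<omega>. as_path m T (Jp \<omega>))"
proof -
  interpret prob_space P0 by (rule P0)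
  have pR: "prob_space (uniform_measure P0 ER)"
    using ER_pos ER_P0 by (intro prob_space_uniform_measure) (auto simp: emeasure_eq_measure)
  have pB: "prob_space (uniform_measure P0 BI)"
    using BI_pos BI_P0 by (intro prob_space_uniform_measure) (auto simp: emeasure_eq_measure)
  have mR: "(\<lambda>\<omega>. as_path m T (R \<omega>)) \<in> measurable (uniform_measure P0 ER) (path_space m T)"
    by (subst measurable_cong_sets[OF sets_uniform_measure refl]) (rule R_path_meas)
  have mJ: "(\<lambda>\<omega>. as_path m T (Jp \<omega>)) \<in> measurable (uniform_measure P0 BI) (path_space m T)"
    by (subst measurable_cong_sets[OF sets_uniform_measure refl]) (rule J_path_meas)
  show ?thesis
  proof (rule measure_eqI_PiM_infinite[where I="{0..T}" and M="\<lambda>_. PiM {..<m} (\<lambda>_. borel)"])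
    show "sets (distr (uniform_measure P0 ER) (path_space m T) (\<lambda>\<omega>. as_path m T (R \<omega>))) = sets (PiM {0..T} (\<lambda>_. PiM {..<m} (\<lambda>_. borel)))"
      unfolding path_space_def by simp
    show "sets (distr (uniform_measure P0 BI) (path_space m T) (\<lambda>\<omega>. as_path m T (Jp \<omega>))) = sets (PiM {0..T} (\<lambda>_. PiM {..<m} (\<lambda>_. borel)))"
      unfolding path_space_def by simp
    show "finite_measure (distr (uniform_measure P0 ER) (path_space m T) (\<lambda>\<omega>. as_path m T (R \<omega>)))"
      using prob_space.prob_space_distr[OF pR mR] by (simp add: prob_space_def)
    fix A J assume fJ: "finite J" and J: "J \<subseteq> {0..T}" and A: "\<And>i. i \<in> J \<Longrightarrow> A i \<in> sets (PiM {..<m} (\<lambda>_. borel :: real measure))"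
    let ?E = "prod_emb {0..T} (\<lambda>_. PiM {..<m} (\<lambda>_. borel)) J (PiE J A)"
    have Es: "?E \<in> sets (path_space m T)"
      unfolding path_space_def using fJ J A by (intro sets_PiM_I) auto
    have preR: "(\<lambda>\<omega>. as_path m T (R \<omega>)) -` ?E \<inter> space P0 = {\<omega>\<in>space P0. \<forall>t\<in>J. vecR m (R \<omega> t) \<in> A t}"
      using path_emb[OF J] by auto
    have preJ: "(\<lambda>\<omega>. as_path m T (Jp \<omega>)) -` ?E \<inter> space P0 = {\<omega>\<in>space P0. \<forall>t\<in>J. vecR m (Jp \<omega> t) \<in> A t}"
      using path_emb[OF J] by auto
    have sR: "{\<omega>\<in>space P0. \<forall>t\<in>J. vecR m (R \<omega> t) \<in> A t} \<in> sets P0"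
      using measurable_sets[OF R_path_meas Es] preR by simp
    have sJ: "{\<omega>\<in>space P0. \<forall>t\<in>J. vecR m (Jp \<omega> t) \<in> A t} \<in> sets P0"
      using measurable_sets[OF J_path_meas Es] preJ by simp
    have "emeasure (distr (uniform_measure P0 ER) (path_space m T) (\<lambda>\<omega>. as_path m T (R \<omega>))) ?E
        = emeasure P0 (ER \<inter> {\<omega>\<in>space P0. \<forall>t\<in>J. vecR m (R \<omega> t) \<in> A t}) / emeasure P0 ER"
      using Es mR preR sR ER_P0 by (simp add: emeasure_distr)
    also have "\<dots> = ennreal (measure P0 (ER \<inter> {\<omega>\<in>space P0. \<forall>t\<in>J. vecR m (R \<omega> t) \<in> A t}) / measure P0 ER)"
      using ER_pos by (simp add: emeasure_eq_measure divide_ennreal)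
    also have "\<dots> = ennreal (measure P0 (BI \<inter> {\<omega>\<in>space P0. \<forall>t\<in>J. vecR m (Jp \<omega> t) \<in> A t}) / measure P0 BI)"
      using cyl_ratio_P3[OF fJ J, of A] by simp
    also have "\<dots> = emeasure P0 (BI \<inter> {\<omega>\<in>space P0. \<forall>t\<in>J. vecR m (Jp \<omega> t) \<in> A t}) / emeasure P0 BI"
      using BI_pos by (simp add: emeasure_eq_measure divide_ennreal)
    also have "\<dots> = emeasure (distr (uniform_measure P0 BI) (path_space m T) (\<lambda>\<omega>. as_path m T (Jp \<omega>))) ?E"
      using Es mJ preJ sJ BI_P0 by (simp add: emeasure_distr)
    finally show "emeasure (distr (uniform_measure P0 ER) (path_space m T) (\<lambda>\<omega>. as_path m T (R \<omega>))) ?E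
        = emeasure (distr (uniform_measure P0 BI) (path_space m T) (\<lambda>\<omega>. as_path m T (Jp \<omega>))) ?E" .
  qed
qed

lemma main:
  "(\<integral>\<^sup>+\<omega>. ennreal (\<phi> (as_path m T (R \<omega>))) \<partial>uniform_measure P0 ER)
   = (\<integral>\<^sup>+\<omega>. ennreal (\<phi> (as_path m T (II \<omega>))) \<partial>uniform_measure P0 EI)"
proof -
  have mR: "(\<lambda>\<omega>. as_path m T (R \<omega>)) \<in> measurable (uniform_measure P0 ER) (path_space m T)"
    by (subst measurable_cong_sets[OF sets_uniform_measure refl]) (rule R_path_meas)
  have mJ: "(\<lambda>\<omega>. as_path m T (Jp \<omega>)) \<in> measurable (uniform_measure P0 BI) (path_space m T)"
    by (subst measurable_cong_sets[OF sets_uniform_measure refl]) (rule J_path_meas)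
  have "(\<integral>\<^sup>+\<omega>. ennreal (\<phi> (as_path m T (II \<omega>))) \<partial>uniform_measure P0 EI)
      = (\<integral>\<^sup>+\<omega>. ennreal (\<phi> (as_path m T (II \<omega>))) \<partial>uniform_measure P0 BI)"
    unfolding EI_BI ..
  also have "\<dots> = (\<integral>\<^sup>+\<omega>. ennreal (\<phi> (as_path m T (Jp \<omega>))) \<partial>uniform_measure P0 BI)"
  proof (rule nn_integral_cong_AE)
    show "AE \<omega> in uniform_measure P0 BI. ennreal (\<phi> (as_path m T (II \<omega>))) = ennreal (\<phi> (as_path m T (Jp \<omega>)))"
    proof (rule AE_uniform_measureI[OF BI_P0], rule AE_I2, rule impI)
      fix \<omega> assume w: "\<omega> \<in> BI"
      have "as_path m T (II \<omega>) = as_path m T (Jp \<omega>)"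
        unfolding as_path_def using I_eq_Jp[of \<omega>] w unfolding BI_def by (intro restrict_ext) auto
      then show "ennreal (\<phi> (as_path m T (II \<omega>))) = ennreal (\<phi> (as_path m T (Jp \<omega>)))" by simp
    qed
  qed
  also have "\<dots> = (\<integral>\<^sup>+x. ennreal (\<phi> x) \<partial>distr (uniform_measure P0 BI) (path_space m T) (\<lambda>\<omega>. as_path m T (Jp \<omega>)))"
    using mJ phi_ennreal_meas by (simp add: nn_integral_distr)
  also have "\<dots> = (\<integral>\<^sup>+x. ennreal (\<phi> x) \<partial>distr (uniform_measure P0 ER) (path_space m T) (\<lambda>\<omega>. as_path m T (R \<omega>)))"
    unfolding distr_eq ..
  also have "\<dots> = (\<integral>\<^sup>+\<omega>. ennreal (\<phi> (as_path m T (R \<omega>))) \<partial>uniform_measure P0 ER)"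
    using mR phi_ennreal_meas by (simp add: nn_integral_distr)
  finally show ?thesis by simp
qed

end

theorem proposition3:
  fixes n1 n2 m1 m2 :: nat and T :: real and y :: "nat \<Rightarrow> nat"
    and \<nu> :: "nat \<Rightarrow> nat \<Rightarrow> int"
    and lam :: "real \<Rightarrow> (nat \<Rightarrow> nat) \<Rightarrow> (nat \<Rightarrow> nat) \<Rightarrow> nat \<Rightarrow> real"
    and \<mu> :: "(nat \<Rightarrow> nat) pmf"
    and P0 :: "'a measure"
    and Z0 :: "'a \<Rightarrow> nat \<Rightarrow> nat" and R :: "'a \<Rightarrow> real \<Rightarrow> nat \<Rightarrow> nat" and Op :: "'a set"
    and Zf :: "nat \<Rightarrow> 'a \<Rightarrow> nat \<Rightarrow> nat" and Kp :: "nat \<Rightarrow> 'a \<Rightarrow> nat \<Rightarrow> nat"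
    and \<zeta> :: "nat \<Rightarrow> nat \<Rightarrow> 'a \<Rightarrow> real"
    and \<phi> :: "(real \<Rightarrow> nat \<Rightarrow> real) \<Rightarrow> real"
    and k z0 :: "nat \<Rightarrow> nat"
  assumes dims: "n2 = m2"
    and T_pos: "T > 0"
    and y_vec: "y \<in> vecs n2"
    and B_inv: "block_invertible n1 m1 m2 \<nu>"
    and lam_pos: "\<forall>t\<in>{0..T}. \<forall>z\<in>vecs (n1+n2). \<forall>yy\<in>vecs n2. \<forall>i<m1+m2. lam t z yy i > 0"
    and lam_int: "\<forall>z\<in>vecs (n1+n2). \<forall>yy\<in>vecs n2. \<forall>i<m1+m2.
                    set_integrable lborel {0..T} (\<lambda>t. lam t z yy i)"
    and mu_vec: "set_pmf \<mu> \<subseteq> vecs (n1+n2)"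
    and P0: "prob_space P0"
    and lab_vals: "\<forall>\<omega>\<in>space P0. Z0 \<omega> \<in> vecs (n1+n2) \<and> counting_path (m1+m2) T (R \<omega>)"
    and Op_ev: "Op \<in> sets P0" and Op_pos: "measure P0 Op > 0"
    and Z0_law: "\<forall>z. measure P0 (Op \<inter> {\<omega>\<in>space P0. Z0 \<omega> = z}) = measure P0 Op * pmf \<mu> z"
    and R_law: "\<forall>z\<in>vecs (n1+n2). cond_poisson_process P0 (Op \<inter> {\<omega>\<in>space P0. Z0 \<omega> = z}) R (m1+m2) T
                    (\<lambda>i t. lam t z y i)"
    and filt_vals: "\<forall>\<omega>\<in>space P0. \<forall>i. Zf i \<omega> \<in> vecs (n1+n2) \<and> Kp i \<omega> \<in> vecs m1"
    and filt_law: "\<forall>i z. \<forall>kk\<in>vecs m1.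
        measure P0 (Op \<inter> {\<omega>\<in>space P0. Zf i \<omega> = z \<and> Kp i \<omega> = kk})
        = measure P0 Op * pmf \<mu> z * (\<Prod>j<m1. poisson_prob (LINT t:{0..T}|lborel. lam t z y j) (kk j))"
    and zeta_law: "\<forall>i l c. 0 \<le> c \<and> c \<le> 1 \<longrightarrow>
        measure P0 (Op \<inter> {\<omega>\<in>space P0. \<zeta> i l \<omega> \<le> c}) = measure P0 Op * c"
    and indep: "prob_space.indep_sets (uniform_measure P0 Op) (src_sigma P0 Z0 R T Zf Kp \<zeta>) UNIV"
    and O_pos: "measure P0 (Op \<inter> obs_event P0 n1 n2 (m1+m2) \<nu> y Z0 R T) > 0"
    and phi_meas: "\<phi> \<in> borel_measurable (path_space (m1+m2) T)"
    and phi_nonneg: "\<forall>p\<in>space (path_space (m1+m2) T). 0 \<le> \<phi> p"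
    and k_vec: "k \<in> vecs (m1+m2)" and z0_vec: "z0 \<in> vecs (n1+n2)"
    and condR_pos: "measure P0 ({\<omega>\<in>space P0. R \<omega> T = k \<and> Z0 \<omega> = z0}
                       \<inter> (Op \<inter> obs_event P0 n1 n2 (m1+m2) \<nu> y Z0 R T)) > 0"
    and condI_pos: "measure P0 ({\<omega>\<in>space P0. interp_I n1 m1 m2 \<nu> y T lam Zf Kp \<zeta> \<omega> T = k
                                  \<and> Ztil0 n1 m1 m2 \<nu> y Zf Kp \<omega> = z0}
                       \<inter> (Op \<inter> obs_event P0 n1 n2 (m1+m2) \<nu> y Z0 R T)) > 0"
  shows "(\<integral>\<^sup>+\<omega>. ennreal (\<phi> (as_path (m1+m2) T (R \<omega>)))
            \<partial>uniform_measure P0 ({\<omega>\<in>space P0. R \<omega> T = k \<and> Z0 \<omega> = z0}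
                       \<inter> (Op \<inter> obs_event P0 n1 n2 (m1+m2) \<nu> y Z0 R T)))
       = (\<integral>\<^sup>+\<omega>. ennreal (\<phi> (as_path (m1+m2) T (interp_I n1 m1 m2 \<nu> y T lam Zf Kp \<zeta> \<omega>)))
            \<partial>uniform_measure P0 ({\<omega>\<in>space P0. interp_I n1 m1 m2 \<nu> y T lam Zf Kp \<zeta> \<omega> T = k
                                  \<and> Ztil0 n1 m1 m2 \<nu> y Zf Kp \<omega> = z0}
                       \<inter> (Op \<inter> obs_event P0 n1 n2 (m1+m2) \<nu> y Z0 R T)))"
proof -
  interpret P3 n1 n2 m1 m2 T y \<nu> lam \<mu> P0 Z0 R Op Zf Kp \<zeta> \<phi> k z0
    by (rule P3.intro) (fact assms)+
  show ?thesis using main unfolding ER_def EI_def .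
qed

end
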